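(* Let $Q$ be a quantum circuit acting on $w$ qubits and let $N$ be a positive integer that is a power of two; set $l=\log_2N+3$. Let $R_2^{(N)}$ be the circuit with registers: an $l$-qubit counter register $\mathsf{C}$ whose first two qubits $\mathsf{C}^{(1)},\mathsf{C}^{(2)}$ are the first two qubits of the whole circuit and hold the two most significant bits, a single-qubit register $\mathsf{Q}$, and for each $j\in\{1,\dots,8N\}$ a $(w-1)$-qubit register $\mathsf{R}_j$ and a single-qubit register $\mathsf{X}_j$; it first applies $U^{(8N)}_{+1}$ to $\mathsf{C}$ exactly $N$ times, where $U^{(8N)}_{+1}|j\rangle=|(j+1)\bmod 8N\rangle$, and then for $j=1,\dots,8N$ in turn applies $Q$ to $(\mathsf{Q},\mathsf{R}_j)$ (with $\mathsf{Q}$ as $Q$'s first qubit), CNOT with control $\mathsf{Q}$ and target $\mathsf{X}_j$, and the controlled-$U^{(8N)}_{+1}$ with control $\mathsf{Q}$ and target $\mathsf{C}$; its output qubit is $\mathsf{C}^{(1)}$. Then \[p_{\mathrm{acc}}(R_2^{(N)},2)\ge\bigl(p_{\mathrm{acc}}(Q,1)\bigr)^{8N-1}.\]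
   Context: For a circuit $Q$ on $w$ qubits and $1\le k\le w$, $p_{\mathrm{acc}}(Q,k)=\mathrm{tr}\,\Pi_{\mathrm{acc}}Q\rho^{(w,k)}_{\mathrm{init}}Q^\dagger$, where $\rho^{(w,k)}_{\mathrm{init}}=(|0\rangle\langle0|)^{\otimes k}\otimes(I/2)^{\otimes(w-k)}$ and $\Pi_{\mathrm{acc}}=|0\rangle\langle0|\otimes I^{\otimes(w-1)}$; i.e., the first $k$ qubits start in $|0\rangle$, the remaining qubits are maximally mixed, and acceptance means the first qubit is measured as $0$ in the computational basis. For $R_2^{(N)}$, only $\mathsf{C}^{(1)}$ and $\mathsf{C}^{(2)}$ are clean; all other qubits start maximally mixed. The counter register $\mathsf{C}$ encodes an integer in $\{0,\dots,8N-1\}$ in binary. *)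

theory Defs
  imports "Jordan_Normal_Form.Schur_Decomposition" "HOL-Library.Discrete_Functions"
begin

text \<open>Computational basis index a < 2^n encodes the bit string b_0 b_1 ... b_(n-1),
  where qubit number t (0-based position; "first qubit" = position 0) is the
  bit of weight 2^(n-1-t), i.e. the first qubit is the most significant bit.\<close>

definition qbit :: "nat \<Rightarrow> nat \<Rightarrow> nat \<Rightarrow> nat" where
  "qbit n a t = (a div 2 ^ (n - 1 - t)) mod 2"

definition unitary_mat :: "nat \<Rightarrow> complex mat \<Rightarrow> bool" where
  "unitary_mat d U \<longleftrightarrow> U \<in> carrier_mat d d \<and> U * mat_adjoint U = 1\<^sub>m d \<and> mat_adjoint U * U = 1\<^sub>m d"

text \<open>Initial state rho_init^(w,k) = |0><0|^(tensor k) tensor (I/2)^(tensor (w-k)):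
  diagonal, with entry 1/2^(w-k) on basis states whose first k qubits are 0.\<close>
definition rho_init :: "nat \<Rightarrow> nat \<Rightarrow> complex mat" where
  "rho_init w k = mat (2^w) (2^w) (\<lambda>(a,b).
     if a = b \<and> (\<forall>t<k. qbit w a t = 0) then 1 / 2 ^ (w - k) else 0)"

definition Pi_acc :: "nat \<Rightarrow> complex mat" where
  "Pi_acc w = mat (2^w) (2^w) (\<lambda>(a,b). if a = b \<and> qbit w a 0 = 0 then 1 else 0)"

definition mat_trace :: "complex mat \<Rightarrow> complex" where
  "mat_trace A = (\<Sum>i<dim_row A. A $$ (i,i))"

definition p_acc :: "nat \<Rightarrow> complex mat \<Rightarrow> nat \<Rightarrow> real" where
  "p_acc w Q k = Re (mat_trace (Pi_acc w * Q * rho_init w k * mat_adjoint Q))"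

text \<open>Index of the sub-basis state of the qubits listed in qs (first listed qubit = most
  significant bit of the gate's local index).\<close>
definition sub_index :: "nat \<Rightarrow> nat list \<Rightarrow> nat \<Rightarrow> nat" where
  "sub_index n qs a = (\<Sum>t<length qs. qbit n a (qs ! t) * 2 ^ (length qs - 1 - t))"

definition embed :: "nat \<Rightarrow> nat list \<Rightarrow> complex mat \<Rightarrow> complex mat" where
  "embed n qs G = mat (2^n) (2^n) (\<lambda>(a,b).
     if \<forall>t<n. t \<notin> set qs \<longrightarrow> qbit n a t = qbit n b t
     then G $$ (sub_index n qs a, sub_index n qs b) else 0)"

text \<open>Circuit from a list of gates (applied in list order).\<close>
definition circuit :: "nat \<Rightarrow> complex mat list \<Rightarrow> complex mat" where
  "circuit n gs = foldl (\<lambda>M G. G * M) (1\<^sub>m (2^n)) gs"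

definition U_inc :: "nat \<Rightarrow> nat \<Rightarrow> complex mat" where
  "U_inc l M = mat (2^l) (2^l) (\<lambda>(a,b). if a = (b + 1) mod M then 1 else 0)"

text \<open>Controlled-U with the control as first qubit.\<close>
definition controlled :: "nat \<Rightarrow> complex mat \<Rightarrow> complex mat" where
  "controlled l U = mat (2^(l+1)) (2^(l+1)) (\<lambda>(a,b).
     if a < 2^l \<and> b < 2^l then (if a = b then 1 else 0)
     else if 2^l \<le> a \<and> 2^l \<le> b then U $$ (a - 2^l, b - 2^l) else 0)"

definition CNOT :: "complex mat" where
  "CNOT = controlled 1 (mat 2 2 (\<lambda>(a,b). if a \<noteq> b then 1 else 0))"

text \<open>Register layout of R_2^(N) (0-based qubit positions), with l = log2 N + 3:
  C = positions 0..l-1 (position 0 = C^(1), position 1 = C^(2), most significant first);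
  Q = position l; for j = 1..8N, R_j = positions l+1+(j-1)w .. l+(j-1)w+w-1 (w-1 qubits)
  and X_j = position l+(j-1)w+w.\<close>
definition R2_l :: "nat \<Rightarrow> nat" where "R2_l N = floor_log N + 3"
definition R2_n :: "nat \<Rightarrow> nat \<Rightarrow> nat" where "R2_n N w = R2_l N + 1 + 8 * N * w"
definition R2_R :: "nat \<Rightarrow> nat \<Rightarrow> nat \<Rightarrow> nat list" where
  "R2_R N w j = [R2_l N + 1 + (j - 1) * w ..< R2_l N + (j - 1) * w + w]"
definition R2_X :: "nat \<Rightarrow> nat \<Rightarrow> nat \<Rightarrow> nat" where
  "R2_X N w j = R2_l N + (j - 1) * w + w"

definition R2 :: "nat \<Rightarrow> nat \<Rightarrow> complex mat \<Rightarrow> complex mat" where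
  "R2 N w Q = (let l = R2_l N; n = R2_n N w; C = [0..<l]; Qr = l in
     circuit n
       (replicate N (embed n C (U_inc l (8 * N))) @
        concat (map (\<lambda>j. [embed n (Qr # R2_R N w j) Q,
                            embed n [Qr, R2_X N w j] CNOT,
                            embed n (Qr # C) (controlled l (U_inc l (8 * N)))])
                    [1..<8 * N + 1])))"

end

theory Submission
  imports Defs
begin

definition fb :: "nat \<Rightarrow> (nat \<Rightarrow> nat) \<Rightarrow> nat" where
  "fb n f = (\<Sum>t<n. f t * 2^(n-1-t))"

lemma sub_index_fb: "sub_index n qs a = fb (length qs) (\<lambda>t. qbit n a (qs!t))"
  by (simp add: sub_index_def fb_def)

lemma bin_lt: "(\<forall>i<n. g i \<le> (1::nat)) \<Longrightarrow> (\<Sum>i<n. g i * 2^i) < 2^n"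
proof (induction n)
  case 0 then show ?case by simp
next
  case (Suc n)
  have g: "g n * 2^n \<le> 1 * 2^n" using Suc.prems by (intro mult_le_mono1) auto
  have "(\<Sum>i<Suc n. g i * 2^i) = (\<Sum>i<n. g i * 2^i) + g n * 2^n" by simp
  also have "\<dots> < 2^n + g n * 2^n" using Suc by simp
  also have "\<dots> \<le> 2^Suc n" using g by simp
  finally show ?case .
qed

lemma bin_bit: "(\<forall>i<n. g i \<le> (1::nat)) \<Longrightarrow> k < n \<Longrightarrow> (\<Sum>i<n. g i * 2^i) div 2^k mod 2 = g k"
proof (induction n)
  case 0 then show ?case by simp
next
  case (Suc n)
  have S: "(\<Sum>i<Suc n. g i * 2^i) = (\<Sum>i<n. g i * 2^i) + g n * 2^n" by simp
  show ?case
  proof (cases "k < n")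
    case True
    have e: "g n * 2^n = (g n * 2^(n-k)) * 2^k" using True
      by (simp add: power_add[symmetric])
    have "(\<Sum>i<Suc n. g i * 2^i) div 2^k = (\<Sum>i<n. g i * 2^i) div 2^k + g n * 2^(n-k)"
      unfolding S e by simp
    moreover have "even (g n * 2^(n-k))" using True by simp
    then obtain m where m: "g n * 2^(n-k) = 2 * m" by (rule evenE)
    ultimately show ?thesis using Suc True by simp
  next
    case False
    then have k: "k = n" using Suc.prems by simp
    have lt: "(\<Sum>i<n. g i * 2^i) < 2^n" using Suc.prems by (intro bin_lt) auto
    have "(\<Sum>i<Suc n. g i * 2^i) div 2^k = g n"
      unfolding S k using lt by simp
    then show ?thesis using Suc.prems k by (cases "g n") auto
  qed
qed

lemma bin_of: "(\<Sum>i<n. (a div 2^i mod 2) * 2^i) = (a::nat) mod 2^n"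
proof (induction n)
  case 0 then show ?case by simp
next
  case (Suc n)
  have "a mod (2^n * 2) = 2^n * (a div 2^n mod 2) + a mod 2^n" by (rule mod_mult2_eq)
  then show ?case using Suc by (simp add: mult.commute)
qed

lemma fb_bin: "fb n f = (\<Sum>i<n. f (n - Suc i) * 2^i)"
proof -
  have "fb n f = (\<Sum>i<n. (\<lambda>t. f t * 2^(n-1-t)) (n - Suc i))"
    unfolding fb_def by (rule sum.nat_diff_reindex[symmetric])
  also have "\<dots> = (\<Sum>i<n. f (n - Suc i) * 2^i)"
    by (intro sum.cong) auto
  finally show ?thesis .
qed

lemma fb_lt: "(\<forall>t<n. f t \<le> 1) \<Longrightarrow> fb n f < 2^n"
  unfolding fb_bin by (intro bin_lt) auto

lemma qbit_fb: "(\<forall>t<n. f t \<le> 1) \<Longrightarrow> t < n \<Longrightarrow> qbit n (fb n f) t = f t"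
  unfolding fb_bin qbit_def
  by (subst bin_bit) auto

lemma qbit_le1[simp]: "qbit n a t \<le> 1"
  by (simp add: qbit_def)

lemma qbit_le1'[simp]: "qbit n a t \<le> Suc 0"
  by (simp add: qbit_def)

lemma fb_qbit: "a < 2^n \<Longrightarrow> fb n (qbit n a) = a"
proof -
  assume a: "a < 2^n"
  have "fb n (qbit n a) = (\<Sum>i<n. (a div 2^i mod 2) * 2^i)"
    unfolding fb_bin qbit_def by (intro sum.cong) auto
  also have "\<dots> = a" using a by (simp add: bin_of)
  finally show ?thesis .
qed

lemma fb_cong: "(\<forall>t<n. f t = g t) \<Longrightarrow> fb n f = fb n g"
  unfolding fb_def by (intro sum.cong) auto

lemma bits_eq: "a < 2^n \<Longrightarrow> b < 2^n \<Longrightarrow> (\<forall>t<n. qbit n a t = qbit n b t) \<Longrightarrow> a = b"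
  by (metis fb_qbit fb_cong)

fun idx :: "nat list \<Rightarrow> nat \<Rightarrow> nat" where
  "idx [] t = 0"
| "idx (x#xs) t = (if x = t then 0 else Suc (idx xs t))"

lemma idx_nth: "distinct qs \<Longrightarrow> i < length qs \<Longrightarrow> idx qs (qs!i) = i"
proof (induction qs arbitrary: i)
  case Nil then show ?case by simp
next
  case (Cons x xs) then show ?case
    by (cases i) (auto simp: nth_mem)
qed

lemma idx_in: "t \<in> set qs \<Longrightarrow> idx qs t < length qs \<and> qs ! idx qs t = t"
  by (induction qs) auto

definition upd :: "nat \<Rightarrow> nat list \<Rightarrow> nat \<Rightarrow> nat \<Rightarrow> nat" where
  "upd n qs a s = fb n (\<lambda>t. if t \<in> set qs then qbit (length qs) s (idx qs t) else qbit n a t)"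

lemma qbit_upd: "t < n \<Longrightarrow> qbit n (upd n qs a s) t =
   (if t \<in> set qs then qbit (length qs) s (idx qs t) else qbit n a t)"
  unfolding upd_def by (subst qbit_fb) auto

lemma upd_lt[simp]: "upd n qs a s < 2^n"
  unfolding upd_def by (intro fb_lt) auto

lemma sub_lt[simp]: "sub_index n qs a < 2^length qs"
  unfolding sub_index_fb by (intro fb_lt) auto

lemma qbit_sub: "i < length qs \<Longrightarrow> qbit (length qs) (sub_index n qs a) i = qbit n a (qs!i)"
  unfolding sub_index_fb by (subst qbit_fb) auto

lemma sub_cong: "(\<forall>t\<in>set qs. qbit n a t = qbit n b t) \<Longrightarrow> sub_index n qs a = sub_index n qs b"
  unfolding sub_index_def by (intro sum.cong) (auto simp: nth_mem)

lemma sub_upd: "distinct qs \<Longrightarrow> set qs \<subseteq> {..<n} \<Longrightarrow> s < 2^length qs \<Longrightarrow>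
   sub_index n qs (upd n qs a s) = s"
proof -
  assume d: "distinct qs" and q: "set qs \<subseteq> {..<n}" and s: "s < 2^length qs"
  have "sub_index n qs (upd n qs a s) = fb (length qs) (qbit (length qs) s)"
    unfolding sub_index_fb
  proof (intro fb_cong allI impI)
    fix i assume i: "i < length qs"
    then have "qs!i < n" using q nth_mem by blast
    then show "qbit n (upd n qs a s) (qs ! i) = qbit (length qs) s i"
      using i d by (simp add: qbit_upd nth_mem idx_nth)
  qed
  also have "\<dots> = s" using s by (rule fb_qbit)
  finally show ?thesis .
qed

lemma upd_sub: "a < 2^n \<Longrightarrow> set qs \<subseteq> {..<n} \<Longrightarrow> upd n qs a (sub_index n qs a) = a"
  by (rule bits_eq[of _ n]) (auto simp: qbit_upd qbit_sub idx_in)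

lemma upd_upd: "upd n qs (upd n qs a s) s' = upd n qs a s'"
  by (rule bits_eq[of _ n]) (auto simp: qbit_upd)

lemma sum_decomp:
  assumes d: "distinct qs" and q: "set qs \<subseteq> {..<n}"
  shows "(\<Sum>c<2^n. F c) = (\<Sum>z\<in>{z. z<2^n \<and> sub_index n qs z = 0}. \<Sum>s<2^length qs. F (upd n qs z s))"
proof -
  let ?Z = "{z. z<2^n \<and> sub_index n qs z = 0}"
  have "(\<Sum>z\<in>?Z. \<Sum>s<2^length qs. F (upd n qs z s)) = (\<Sum>(z,s)\<in>?Z \<times> {..<2^length qs}. F (upd n qs z s))"
    by (rule sum.cartesian_product)
  also have "\<dots> = (\<Sum>c<2^n. F c)"
  proof (rule sum.reindex_bij_witness[where j = "\<lambda>(z,s). upd n qs z s" and i = "\<lambda>c. (upd n qs c 0, sub_index n qs c)"])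
    fix a :: "nat \<times> nat" assume "a \<in> ?Z \<times> {..<2^length qs}"
    then obtain z s where a: "a = (z,s)" "z < 2^n" "sub_index n qs z = 0" "s < 2^length qs" by auto
    have "upd n qs z 0 = z" using upd_sub[OF a(2) q] a(3) by simp
    then show "(\<lambda>c. (upd n qs c 0, sub_index n qs c)) ((\<lambda>(z,s). upd n qs z s) a) = a"
      using a d q by (simp add: upd_upd sub_upd)
    show "(\<lambda>(z,s). upd n qs z s) a \<in> {..<(2::nat)^n}" using a by simp
    show "F ((\<lambda>(z,s). upd n qs z s) a) = (case a of (z,s) \<Rightarrow> F (upd n qs z s))" using a by simp
  next
    fix b assume b: "b \<in> {..<(2::nat)^n}"
    then show "(\<lambda>(z,s). upd n qs z s) ((\<lambda>c. (upd n qs c 0, sub_index n qs c)) b) = b"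
      using q by (simp add: upd_upd upd_sub)
    show "(\<lambda>c. (upd n qs c 0, sub_index n qs c)) b \<in> ?Z \<times> {..<2^length qs}"
      using d q by (simp add: sub_upd)
  qed
  finally show ?thesis by simp
qed

lemma adj_index[simp]: "i < dim_col A \<Longrightarrow> j < dim_row A \<Longrightarrow> mat_adjoint A $$ (i,j) = conjugate (A $$ (j,i))"
  by (simp add: mat_adjoint_def mat_of_rows_index)

lemma adj_dim[simp]: "dim_row (mat_adjoint A) = dim_col A" "dim_col (mat_adjoint A) = dim_row A"
  by (simp_all add: mat_adjoint_def)

lemma mult_entry: "A \<in> carrier_mat m d \<Longrightarrow> B \<in> carrier_mat d k \<Longrightarrow> i < m \<Longrightarrow> j < k \<Longrightarrow>
   (A * B) $$ (i,j) = (\<Sum>c<d. A $$ (i,c) * B $$ (c,j))"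
  by (auto simp: scalar_prod_def atLeast0LessThan intro!: sum.cong)

lemma conj_sq: "(z::complex) * conjugate z = of_real ((cmod z)^2)"
  using complex_norm_square[of z] by simp

lemma embed_entry: "a < 2^n \<Longrightarrow> c < 2^n \<Longrightarrow> embed n qs G $$ (a,c) =
   (if \<forall>t<n. t \<notin> set qs \<longrightarrow> qbit n a t = qbit n c t then G $$ (sub_index n qs a, sub_index n qs c) else 0)"
  by (simp add: embed_def)

lemma embed_carrier[simp]: "embed n qs G \<in> carrier_mat (2^n) (2^n)"
  by (simp add: embed_def)

lemma embed_mult:
  assumes d: "distinct qs" and q: "set qs \<subseteq> {..<n}" and M: "M \<in> carrier_mat (2^n) k"
    and a: "a < 2^n" and b: "b < k"
  shows "(embed n qs G * M) $$ (a,b) = (\<Sum>s<2^length qs. G $$ (sub_index n qs a, s) * M $$ (upd n qs a s, b))"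
proof -
  let ?F = "\<lambda>c. embed n qs G $$ (a,c) * M $$ (c,b)"
  let ?S = "upd n qs a ` {..<2^length qs}"
  have "(embed n qs G * M) $$ (a,b) = (\<Sum>c<2^n. ?F c)"
    using M a b by (intro mult_entry) auto
  also have "\<dots> = (\<Sum>c\<in>?S. ?F c)"
  proof (rule sum.mono_neutral_right)
    show "finite {..<(2::nat)^n}" by simp
    show "?S \<subseteq> {..<2^n}" by auto
    show "\<forall>c\<in>{..<2 ^ n} - ?S. ?F c = 0"
    proof
      fix c assume c: "c \<in> {..<2 ^ n} - ?S"
      show "?F c = 0"
      proof (cases "\<forall>t<n. t \<notin> set qs \<longrightarrow> qbit n a t = qbit n c t")
        case True
        have "upd n qs a (sub_index n qs c) = c"
          using True c by (intro bits_eq[of _ n]) (auto simp: qbit_upd qbit_sub idx_in)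
        then have "c \<in> ?S" by (metis image_eqI lessThan_iff sub_lt)
        then show ?thesis using c by simp
      next
        case False then show ?thesis using c a by (simp add: embed_entry del: not_all)
      qed
    qed
  qed
  also have "\<dots> = (\<Sum>s<2^length qs. ?F (upd n qs a s))"
  proof -
    have "inj_on (upd n qs a) {..<2 ^ length qs}"
      by (rule inj_onI) (metis sub_upd d q lessThan_iff)
    then show ?thesis by (subst sum.reindex) (simp_all add: o_def)
  qed
  also have "\<dots> = (\<Sum>s<2^length qs. G $$ (sub_index n qs a, s) * M $$ (upd n qs a s, b))"
  proof (intro sum.cong refl)
    fix s :: nat assume s: "s \<in> {..<2^length qs}"
    have "embed n qs G $$ (a, upd n qs a s) = G $$ (sub_index n qs a, s)"
      using a s d q by (simp add: embed_entry qbit_upd sub_upd)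
    then show "?F (upd n qs a s) = G $$ (sub_index n qs a, s) * M $$ (upd n qs a s, b)" by simp
  qed
  finally show ?thesis .
qed




lemma Pi_carrier: "Pi_acc w \<in> carrier_mat (2^w) (2^w)"
  by (simp add: Pi_acc_def)
lemma Pi_entry: "i < 2^w \<Longrightarrow> e < 2^w \<Longrightarrow> Pi_acc w $$ (i,e) = (if i = e \<and> qbit w i 0 = 0 then 1 else 0)"
  unfolding Pi_acc_def by (simp only: index_mat case_prod_conv)
lemma Pi_entry2: "i < 2^w \<Longrightarrow> e < 2^w \<Longrightarrow> Pi_acc w $$ (i,e) = (if i = e \<and> qbit w i 0 = 0 then 1 else 0)"
  unfolding Pi_acc_def by simp
lemma rho_carrier: "rho_init w k \<in> carrier_mat (2^w) (2^w)"
  by (simp add: rho_init_def)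
lemma rho_entry: "i < 2^w \<Longrightarrow> e < 2^w \<Longrightarrow> rho_init w k $$ (i,e) =
   (if i = e \<and> (\<forall>t<k. qbit w i t = 0) then 1 / 2 ^ (w - k) else 0)"
  unfolding rho_init_def by simp
lemma adj_carrier: "U \<in> carrier_mat d d \<Longrightarrow> mat_adjoint U \<in> carrier_mat d d"
  by (metis adj_dim carrier_matD carrier_matI)

lemma sum_single: "finite A \<Longrightarrow> i \<in> A \<Longrightarrow> (\<And>e. e \<in> A \<Longrightarrow> e \<noteq> i \<Longrightarrow> f e = 0) \<Longrightarrow> sum f A = (f i :: 'a::comm_monoid_add)"
proof -
  assume A: "finite A" "i \<in> A" and z: "\<And>e. e \<in> A \<Longrightarrow> e \<noteq> i \<Longrightarrow> f e = 0"
  have "sum f A = f i + sum f (A - {i})" using A by (rule sum.remove)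
  also have "sum f (A - {i}) = 0" using z by (intro sum.neutral) auto
  finally show ?thesis by simp
qed

lemma Pi_U_entry: assumes U: "U \<in> carrier_mat (2^w) (2^w)" and i: "i < 2^w" and c: "c < 2^w"
  shows "(Pi_acc w * U) $$ (i,c) = (if qbit w i 0 = 0 then U $$ (i,c) else 0)"
proof -
  have "(Pi_acc w * U) $$ (i,c) = (\<Sum>e<2^w. Pi_acc w $$ (i,e) * U $$ (e,c))"
    by (rule mult_entry[OF Pi_carrier U i c])
  also have "\<dots> = Pi_acc w $$ (i,i) * U $$ (i,c)"
    by (rule sum_single) (use i in \<open>auto simp: Pi_entry\<close>)
  finally show ?thesis using i by (simp add: Pi_entry)
qed

lemma PUR_entry: assumes U: "U \<in> carrier_mat (2^w) (2^w)" and i: "i < 2^w" and c: "c < 2^w"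
  shows "(Pi_acc w * U * rho_init w k) $$ (i,c) = (if qbit w i 0 = 0 then U $$ (i,c) else 0) *
      (if (\<forall>t<k. qbit w c t = 0) then 1 / 2 ^ (w - k) else 0)"
proof -
  have PU: "Pi_acc w * U \<in> carrier_mat (2^w) (2^w)" using Pi_carrier U by (rule mult_carrier_mat)
  have "(Pi_acc w * U * rho_init w k) $$ (i,c) = (\<Sum>e<2^w. (Pi_acc w * U) $$ (i,e) * rho_init w k $$ (e,c))"
    by (rule mult_entry[OF PU rho_carrier i c])
  also have "\<dots> = (Pi_acc w * U) $$ (i,c) * rho_init w k $$ (c,c)"
    by (rule sum_single) (use c in \<open>auto simp: rho_entry\<close>)
  finally show ?thesis using i c U by (simp add: rho_entry Pi_U_entry)
qed

lemma p_acc_formula: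
  assumes U: "U \<in> carrier_mat (2^w) (2^w)"
  shows "p_acc w U k = (\<Sum>a<2^w. \<Sum>b<2^w.
     (if qbit w a 0 = 0 \<and> (\<forall>t<k. qbit w b t = 0) then 1 / 2^(w-k) else 0) * (cmod (U $$ (a,b)))^2)"
proof -
  have PUR: "Pi_acc w * U * rho_init w k \<in> carrier_mat (2^w) (2^w)"
    using Pi_carrier U rho_carrier by (meson mult_carrier_mat)
  have UA: "mat_adjoint U \<in> carrier_mat (2^w) (2^w)" using U by (rule adj_carrier)
  have e3: "(Pi_acc w * U * rho_init w k * mat_adjoint U) $$ (i,i) =
      (\<Sum>c<2^w. of_real ((if qbit w i 0 = 0 \<and> (\<forall>t<k. qbit w c t = 0) then 1 / 2^(w-k) else 0) * (cmod (U $$ (i,c)))^2))"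
    if i: "i < 2^w" for i
  proof -
    have "(Pi_acc w * U * rho_init w k * mat_adjoint U) $$ (i,i) =
       (\<Sum>c<2^w. (Pi_acc w * U * rho_init w k) $$ (i,c) * mat_adjoint U $$ (c,i))"
      by (rule mult_entry[OF PUR UA i i])
    also have "\<dots> = (\<Sum>c<2^w. of_real ((if qbit w i 0 = 0 \<and> (\<forall>t<k. qbit w c t = 0) then 1 / 2^(w-k) else 0) * (cmod (U $$ (i,c)))^2))"
    proof (intro sum.cong refl)
      fix c assume c: "c \<in> {..<(2::nat)^w}"
      have adj: "mat_adjoint U $$ (c,i) = conjugate (U $$ (i,c))"
        using U c i by (intro adj_index) auto
      have sq: "U $$ (i,c) * conjugate (U $$ (i,c)) = of_real ((cmod (U $$ (i,c)))^2)" by (rule conj_sq)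
      show "(Pi_acc w * U * rho_init w k) $$ (i,c) * mat_adjoint U $$ (c,i) =
         of_real ((if qbit w i 0 = 0 \<and> (\<forall>t<k. qbit w c t = 0) then 1 / 2^(w-k) else 0) * (cmod (U $$ (i,c)))^2)"
        unfolding adj PUR_entry[OF U i c[simplified]]
        using sq by (auto simp: mult.commute mult.left_commute)
    qed
    finally show ?thesis .
  qed
  have dimr: "dim_row (Pi_acc w * U * rho_init w k * mat_adjoint U) = 2^w" using Pi_carrier[of w] by (simp add: carrier_matD)
  show ?thesis
    unfolding p_acc_def mat_trace_def dimr
    by (simp add: e3 Re_sum)
qed


lemma filt_sum: "(\<Sum>b\<in>{b. b < (k::nat) \<and> P b}. h b) = (\<Sum>b<k. if P b then h b else 0)"
proof -
  have "{b. b < k \<and> P b} = {..<k} \<inter> {b. P b}" by auto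
  then show ?thesis by (simp add: sum.inter_restrict)
qed

lemma col_norm:
  assumes U: "unitary_mat d Q" and b: "b < d"
  shows "(\<Sum>a<d. (cmod (Q $$ (a,b)))^2) = 1"
proof -
  have Q: "Q \<in> carrier_mat d d" and e: "mat_adjoint Q * Q = 1\<^sub>m d" using U by (auto simp: unitary_mat_def)
  have QA: "mat_adjoint Q \<in> carrier_mat d d" using Q by (rule adj_carrier)
  have "(1::complex) = (mat_adjoint Q * Q) $$ (b,b)" using b e by simp
  also have "\<dots> = (\<Sum>a<d. mat_adjoint Q $$ (b,a) * Q $$ (a,b))" by (rule mult_entry[OF QA Q b b])
  also have "\<dots> = (\<Sum>a<d. of_real ((cmod (Q $$ (a,b)))^2))"
  proof (intro sum.cong refl)
    fix a assume a: "a \<in> {..<d}"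
    have "mat_adjoint Q $$ (b,a) = conjugate (Q $$ (a,b))" using Q a b by (intro adj_index) auto
    then show "mat_adjoint Q $$ (b,a) * Q $$ (a,b) = of_real ((cmod (Q $$ (a,b)))^2)"
      using conj_sq[of "Q $$ (a,b)"] by (simp add: mult.commute)
  qed
  also have "\<dots> = of_real (\<Sum>a<d. (cmod (Q $$ (a,b)))^2)" by (rule of_real_sum[symmetric])
  finally have "of_real (\<Sum>a<d. (cmod (Q $$ (a,b)))^2) = (1::complex)" by (rule sym)
  then show ?thesis by (rule of_real_eq_1_iff[THEN iffD1])
qed

lemma row_norm:
  assumes U: "unitary_mat d Q" and a: "a < d"
  shows "(\<Sum>b<d. (cmod (Q $$ (a,b)))^2) = 1"
proof -
  have Q: "Q \<in> carrier_mat d d" and e: "Q * mat_adjoint Q = 1\<^sub>m d" using U by (auto simp: unitary_mat_def)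
  have QA: "mat_adjoint Q \<in> carrier_mat d d" using Q by (rule adj_carrier)
  have "(1::complex) = (Q * mat_adjoint Q) $$ (a,a)" using a e by simp
  also have "\<dots> = (\<Sum>b<d. Q $$ (a,b) * mat_adjoint Q $$ (b,a))" by (rule mult_entry[OF Q QA a a])
  also have "\<dots> = (\<Sum>b<d. of_real ((cmod (Q $$ (a,b)))^2))"
  proof (intro sum.cong refl)
    fix b assume b: "b \<in> {..<d}"
    have "mat_adjoint Q $$ (b,a) = conjugate (Q $$ (a,b))" using Q a b by (intro adj_index) auto
    then show "Q $$ (a,b) * mat_adjoint Q $$ (b,a) = of_real ((cmod (Q $$ (a,b)))^2)"
      using conj_sq[of "Q $$ (a,b)"] by simp
  qed
  also have "\<dots> = of_real (\<Sum>b<d. (cmod (Q $$ (a,b)))^2)" by (rule of_real_sum[symmetric])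
  finally have "of_real (\<Sum>b<d. (cmod (Q $$ (a,b)))^2) = (1::complex)" by (rule sym)
  then show ?thesis by (rule of_real_eq_1_iff[THEN iffD1])
qed

lemma sub_cons: "sub_index n (p#ps) a = qbit n a p * 2^length ps + sub_index n ps a"
  unfolding sub_index_def length_Cons sum.lessThan_Suc_shift by simp

lemma sub_two: "sub_index n [p1,p2] a = 2 * qbit n a p1 + qbit n a p2"
  by (simp add: sub_cons sub_index_def)

lemma qbit_top: "q \<le> 1 \<Longrightarrow> c < 2^m \<Longrightarrow> qbit (Suc m) (q * 2^m + c) 0 = q"
  unfolding qbit_def by auto

lemma qbit_low: "q \<le> 1 \<Longrightarrow> c < 2^m \<Longrightarrow> i < m \<Longrightarrow> qbit (Suc m) (q * 2^m + c) (Suc i) = qbit m c i"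
proof -
  assume q: "q \<le> 1" and c: "c < 2^m" and i: "i < m"
  have e: "q * 2^m = (q * 2^(Suc i)) * 2^(m-1-i)" using i
  proof -
    have "Suc i + (m-1-i) = m" using i by simp
    then show ?thesis by (metis mult.assoc power_add)
  qed
  have "(q * 2^m + c) div 2^(m-1-i) = c div 2^(m-1-i) + q * 2^(Suc i)"
    unfolding e by simp
  moreover have "q * 2^(Suc i) = 2 * (q * 2^i)" by simp
  ultimately have "(q * 2^m + c) div 2^(m-1-i) = c div 2^(m-1-i) + 2 * (q * 2^i)" by simp
  then show ?thesis unfolding qbit_def by simp
qed

lemma modK: "0 < (K::nat) \<Longrightarrow> c < K \<Longrightarrow> q \<le> K \<Longrightarrow> ((c + K - q) mod K = y mod K) \<longleftrightarrow> (c = (y + q) mod K)"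
proof
  assume K: "0 < K" "c < K" "q \<le> K" and h: "(c + K - q) mod K = y mod K"
  have "(c + K - q + q) mod K = (y + q) mod K" using h by (metis mod_add_left_eq)
  moreover have "c + K - q + q = c + K" using K by simp
  ultimately show "c = (y + q) mod K" using K by simp
next
  assume K: "0 < K" "c < K" "q \<le> K" and h: "c = (y + q) mod K"
  have "(c + (K - q)) mod K = (y + q + (K - q)) mod K" using h by (metis mod_add_left_eq)
  moreover have "y + q + (K - q) = y + K" using K by simp
  moreover have "c + K - q = c + (K - q)" using K by simp
  ultimately have "(c + K - q) mod K = (y + K) mod K" by metis
  then show "(c + K - q) mod K = y mod K" by simp
qed

lemma sum_avg:
  fixes F G :: "nat \<Rightarrow> real"
  assumes d: "distinct qs" and q: "set qs \<subseteq> {..<n}"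
    and inv: "\<And>b s. b < 2^n \<Longrightarrow> s < 2^length qs \<Longrightarrow> P (upd n qs b s) = P b \<and> G (upd n qs b s) = G b"
  shows "(\<Sum>b\<in>{b. b<2^n \<and> P b}. F (sub_index n qs b) * G b) =
     (\<Sum>s<2^length qs. F s) / 2^length qs * (\<Sum>b\<in>{b. b<2^n \<and> P b}. G b)"
proof -
  let ?Z = "{z. z<2^n \<and> sub_index n qs z = 0}"
  let ?g = "\<lambda>z. if P z then G z else 0"
  have "(\<Sum>b\<in>{b. b<2^n \<and> P b}. F (sub_index n qs b) * G b) =
       (\<Sum>b<2^n. if P b then F (sub_index n qs b) * G b else 0)" by (rule filt_sum)
  also have "\<dots> = (\<Sum>z\<in>?Z. \<Sum>s<2^length qs. (\<lambda>b. if P b then F (sub_index n qs b) * G b else 0) (upd n qs z s))"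
    by (rule sum_decomp[OF d q])
  also have "\<dots> = (\<Sum>z\<in>?Z. ?g z * (\<Sum>s<2^length qs. F s))"
    by (intro sum.cong refl) (auto simp: inv sub_upd[OF d q] sum_distrib_left mult.commute intro!: sum.cong)
  also have "\<dots> = (\<Sum>z\<in>?Z. ?g z) * (\<Sum>s<2^length qs. F s)" by (simp add: sum_distrib_right)
  finally have 1: "(\<Sum>b\<in>{b. b<2^n \<and> P b}. F (sub_index n qs b) * G b) = (\<Sum>z\<in>?Z. ?g z) * (\<Sum>s<2^length qs. F s)" .
  have "(\<Sum>b\<in>{b. b<2^n \<and> P b}. G b) = (\<Sum>b<2^n. ?g b)" by (rule filt_sum)
  also have "\<dots> = (\<Sum>z\<in>?Z. \<Sum>s<2^length qs. ?g (upd n qs z s))"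
    by (rule sum_decomp[OF d q])
  also have "\<dots> = (\<Sum>z\<in>?Z. ?g z * 2^length qs)"
    by (intro sum.cong refl) (auto simp: inv)
  finally have 2: "(\<Sum>b\<in>{b. b<2^n \<and> P b}. G b) = (\<Sum>z\<in>?Z. ?g z) * 2^length qs" by (simp add: sum_distrib_right)
  show ?thesis unfolding 1 2 by simp
qed

lemma sum_split2: "(\<Sum>a<2*(h::nat). f a) = (\<Sum>a<h. f a) + (\<Sum>r<h. f (h + r)::'a::comm_monoid_add)"
proof -
  have "(\<Sum>a<h+h. f a) = (\<Sum>a<h. f a) + (\<Sum>a\<in>{h..<h+h}. f a)"
  proof -
    have "sum f {0..<h} + sum f {h..<h+h} = sum f {0..<h+h}" by (rule sum.atLeastLessThan_concat) auto
    then show ?thesis by (simp add: atLeast0LessThan)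
  qed
  also have "(\<Sum>a\<in>{h..<h+h}. f a) = (\<Sum>r<h. f (h + r))"
    by (simp add: sum.shift_bounds_nat_ivl[symmetric] atLeast0LessThan[symmetric] add.commute)
  finally show ?thesis by (simp add: mult_2)
qed



lemma embed_perm:
  assumes d: "distinct qs" and q: "set qs \<subseteq> {..<n}" and M: "M \<in> carrier_mat (2^n) k"
    and a: "a < 2^n" and b: "b < k"
    and G: "\<And>s. s < 2^length qs \<Longrightarrow> G $$ (sub_index n qs a, s) = (if s = v then 1 else 0)"
    and v: "v < 2^length qs"
  shows "(embed n qs G * M) $$ (a,b) = M $$ (upd n qs a v, b)"
proof -
  have "(embed n qs G * M) $$ (a,b) = (\<Sum>s<2^length qs. G $$ (sub_index n qs a, s) * M $$ (upd n qs a s, b))"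
    by (rule embed_mult[OF d q M a b])
  also have "\<dots> = G $$ (sub_index n qs a, v) * M $$ (upd n qs a v, b)"
    by (rule sum_single) (use v G in auto)
  finally show ?thesis using G v by simp
qed

lemma cnot_entry: "x < 4 \<Longrightarrow> s < 4 \<Longrightarrow> CNOT $$ (x,s) = (if s = (if x < 2 then x else 5 - x) then 1 else 0)"
proof -
  assume x: "x < 4" and s: "s < 4"
  have xs: "x \<in> {0,1,2,3}" "s \<in> {0,1,2,3}" using x s by auto
  show ?thesis using xs unfolding CNOT_def controlled_def by (auto simp: numeral_eq_Suc)
qed

lemma incK: "0 < (K::nat) \<Longrightarrow> x < K \<Longrightarrow> s < K \<Longrightarrow> (x = (s + 1) mod K) \<longleftrightarrow> (s = (x + K - 1) mod K)"
  using modK[of K x 1 s] by auto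

lemma uinc_entry: "x < 2^l \<Longrightarrow> s < 2^l \<Longrightarrow> U_inc l (2^l) $$ (x,s) = (if s = (x + 2^l - 1) mod 2^l then 1 else 0)"
  unfolding U_inc_def using incK[of "2^l" x s] by simp

lemma ctrl_entry:
  assumes x: "x < 2 * 2^l" and s: "s < 2 * 2^l"
  shows "controlled l (U_inc l (2^l)) $$ (x,s) =
     (if s = (if x < 2^l then x else 2^l + (x - 2^l + 2^l - 1) mod 2^l) then 1 else 0)"
proof (cases "x < 2^l")
  case True then show ?thesis using x s unfolding controlled_def by auto
next
  case False
  then have x2: "x - 2^l < 2^l" using x by auto
  show ?thesis
  proof (cases "s < 2^l")
    case True then show ?thesis using x s False unfolding controlled_def by auto
  next
    case False2: False
    then have s2: "s - 2^l < 2^l" using s by auto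
    have "controlled l (U_inc l (2^l)) $$ (x,s) = U_inc l (2^l) $$ (x - 2^l, s - 2^l)"
      using x s False False2 unfolding controlled_def by auto
    also have "\<dots> = (if s - 2^l = (x - 2^l + 2^l - 1) mod 2^l then 1 else 0)"
      by (rule uinc_entry[OF x2 s2])
    finally show ?thesis using False False2 by auto
  qed
qed



lemma mult_le_aux: "i < (K::nat) \<Longrightarrow> i * w + w \<le> K * w"
proof -
  assume "i < K" then have "Suc i \<le> K" by simp
  then have "Suc i * w \<le> K * w" by (rule mult_le_mono1)
  then show ?thesis by simp
qed

lemma mult_le_aux2: "i < (j::nat) \<Longrightarrow> i * w + w \<le> j * w"
  using mult_le_aux .

locale circ =
  fixes N w m :: nat and Q :: "complex mat"
  assumes w1: "1 \<le> w" and QU: "unitary_mat (2^w) Q" and Nm: "N = 2^m"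
begin

definition ll :: nat where "ll = m + 3"
definition kk :: nat where "kk = 8 * N"
definition nn :: nat where "nn = ll + 1 + kk * w"

definition C :: "nat list" where "C = [0..<ll]"
definition R :: "nat \<Rightarrow> nat list" where "R j = [ll + 1 + (j - 1) * w ..< ll + (j - 1) * w + w]"
definition X :: "nat \<Rightarrow> nat" where "X j = ll + (j - 1) * w + w"
definition QR :: "nat \<Rightarrow> nat list" where "QR j = ll # R j"

lemma K_pow: "kk = 2^ll"
  unfolding kk_def ll_def using Nm by (simp add: power_add)

lemma K_pos: "0 < kk" unfolding kk_def using Nm by simp

lemma lC[simp]: "length C = ll" by (simp add: C_def)
lemma setC: "set C = {..<ll}" by (auto simp: C_def)
lemma dC: "distinct C" by (simp add: C_def)
lemma nC: "set C \<subseteq> {..<nn}" by (auto simp: setC nn_def)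
lemma idxC: "t < ll \<Longrightarrow> idx C t = t"
  using idx_nth[OF dC, of t] by (simp add: C_def)
lemma lR[simp]: "length (R j) = w - 1" using w1 by (simp add: R_def)
lemma ll3: "3 \<le> ll" by (simp add: ll_def)
lemma lQR[simp]: "length (QR j) = w" using w1 by (simp add: QR_def)
lemma setR: "set (R (Suc i)) = {t. ll + 1 + i * w \<le> t \<and> t < ll + i * w + w}"
  by (auto simp: R_def)
lemma XS: "X (Suc i) = ll + i * w + w" by (simp add: X_def)
lemma dR: "distinct (R j)" by (simp add: R_def)
lemma dQR: "distinct (QR j)" by (auto simp: QR_def R_def)
lemma nQR: "i < kk \<Longrightarrow> set (QR (Suc i)) \<subseteq> {..<nn}"
  using mult_le_aux[of i kk w] by (auto simp: QR_def setR nn_def)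
lemma nR: "i < kk \<Longrightarrow> set (R (Suc i)) \<subseteq> {..<nn}"
  using mult_le_aux[of i kk w] by (auto simp: setR nn_def)
lemma nX: "i < kk \<Longrightarrow> X (Suc i) < nn"
  using mult_le_aux[of i kk w] by (simp add: XS nn_def)
lemma setQR: "set (QR (Suc i)) = insert ll {t. ll + 1 + i * w \<le> t \<and> t < ll + i * w + w}"
  by (simp add: QR_def setR)

definition cnt :: "nat \<Rightarrow> nat" where "cnt a = sub_index nn C a"
definition qQ :: "nat \<Rightarrow> nat" where "qQ a = qbit nn a ll"
definition xb :: "nat \<Rightarrow> nat \<Rightarrow> nat" where "xb j a = qbit nn a (X j)"

lemma cnt_lt: "cnt a < kk"
proof -
  have "cnt a < 2^length C" unfolding cnt_def by (rule sub_lt)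
  then show ?thesis using K_pow by simp
qed

lemma qbit_cnt: "t < ll \<Longrightarrow> qbit nn a t = qbit ll (cnt a) t"
  using qbit_sub[of t C nn a] by (simp add: cnt_def C_def)

lemma cnt_bits: "v < kk \<Longrightarrow> (\<And>t. t < ll \<Longrightarrow> qbit nn a t = qbit ll v t) \<Longrightarrow> cnt a = v"
proof -
  assume v: "v < kk" and h: "\<And>t. t < ll \<Longrightarrow> qbit nn a t = qbit ll v t"
  have "cnt a = fb ll (qbit ll v)" unfolding cnt_def sub_index_fb lC
    by (rule fb_cong) (simp add: C_def h)
  also have "\<dots> = v" using v K_pow by (simp add: fb_qbit)
  finally show ?thesis .
qed

lemma cnt_upd: "v < kk \<Longrightarrow> cnt (upd nn C a v) = v"
  unfolding cnt_def using sub_upd[OF dC nC, of v a] K_pow by simp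

end



context circ begin

definition gInc where "gInc = embed nn C (U_inc ll kk)"
definition gQ where "gQ j = embed nn (QR j) Q"
definition gX where "gX j = embed nn [ll, X j] CNOT"
definition gC where "gC = embed nn (ll # C) (controlled ll (U_inc ll kk))"

definition dc :: "nat \<Rightarrow> nat" where
  "dc a = upd nn (ll # C) a (let x = sub_index nn (ll # C) a in if x < kk then x else kk + (x - kk + kk - 1) mod kk)"
definition fx :: "nat \<Rightarrow> nat \<Rightarrow> nat" where
  "fx j a = upd nn [ll, X j] a (let x = sub_index nn [ll, X j] a in if x < 2 then x else 5 - x)"

lemma qQ_le: "qQ a \<le> 1" by (simp add: qQ_def)
lemma xb_le: "xb j a \<le> 1" by (simp add: xb_def)

lemma dlC: "distinct (ll # C)" by (simp add: dC setC)
lemma nlC: "set (ll # C) \<subseteq> {..<nn}" using nC by (simp add: nn_def)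
lemma dlX: "distinct [ll, X (Suc i)]" using w1 by (simp add: XS)
lemma nlX: "i < kk \<Longrightarrow> set [ll, X (Suc i)] \<subseteq> {..<nn}" using nX[of i] by (simp add: nn_def)

lemma gInc_mult:
  assumes M: "M \<in> carrier_mat (2^nn) k" and a: "a < 2^nn" and b: "b < k"
  shows "(gInc * M) $$ (a,b) = M $$ (upd nn C a ((cnt a + kk - 1) mod kk), b)"
proof -
  have v: "(cnt a + kk - 1) mod kk < 2^length C" using K_pos K_pow by simp
  have G: "U_inc ll kk $$ (sub_index nn C a, s) = (if s = (cnt a + kk - 1) mod kk then 1 else 0)"
    if s: "s < 2^length C" for s
  proof -
    have "cnt a < 2^ll" using cnt_lt K_pow by simp
    then show ?thesis using uinc_entry[of "cnt a" ll s] s K_pow by (simp add: cnt_def)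
  qed
  show ?thesis unfolding gInc_def by (rule embed_perm[OF dC nC M a b G v])
qed

lemma sub_lC: "sub_index nn (ll # C) a = qQ a * 2^ll + cnt a"
  by (simp add: sub_cons qQ_def cnt_def)

lemma cv_val: "(let x = sub_index nn (ll # C) a in if x < kk then x else kk + (x - kk + kk - 1) mod kk)
   = qQ a * 2^ll + (cnt a + kk - qQ a) mod kk"
proof -
  have c: "cnt a < kk" by (rule cnt_lt)
  show ?thesis
  proof (cases "qQ a = 0")
    case True then show ?thesis using c K_pow by (simp add: sub_lC)
  next
    case False then have "qQ a = 1" using qQ_le[of a] by simp
    then show ?thesis using c K_pow by (simp add: sub_lC)
  qed
qed

lemma gC_mult:
  assumes M: "M \<in> carrier_mat (2^nn) k" and a: "a < 2^nn" and b: "b < k"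
  shows "(gC * M) $$ (a,b) = M $$ (dc a, b)"
proof -
  let ?v = "let x = sub_index nn (ll # C) a in if x < kk then x else kk + (x - kk + kk - 1) mod kk"
  have v: "?v < 2^length (ll # C)"
  proof -
    have "(cnt a + kk - qQ a) mod kk < 2^ll" using K_pos K_pow by simp
    moreover have "qQ a = 0 \<or> qQ a = 1" using qQ_le[of a] by auto
    ultimately show ?thesis unfolding cv_val by auto
  qed
  have G: "controlled ll (U_inc ll kk) $$ (sub_index nn (ll # C) a, s) = (if s = ?v then 1 else 0)"
    if s: "s < 2^length (ll # C)" for s
  proof -
    have x: "sub_index nn (ll # C) a < 2 * 2^ll" using sub_lt[of nn "ll # C" a] by simp
    have s': "s < 2 * 2^ll" using s by simp
    show ?thesis using ctrl_entry[OF x s'] K_pow by (simp add: Let_def)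
  qed
  show ?thesis unfolding gC_def dc_def by (rule embed_perm[OF dlC nlC M a b G v])
qed

lemma gX_mult:
  assumes i: "i < kk" and M: "M \<in> carrier_mat (2^nn) k" and a: "a < 2^nn" and b: "b < k"
  shows "(gX (Suc i) * M) $$ (a,b) = M $$ (fx (Suc i) a, b)"
proof -
  let ?v = "let x = sub_index nn [ll, X (Suc i)] a in if x < 2 then x else 5 - x"
  have x: "sub_index nn [ll, X (Suc i)] a < 4" using sub_lt[of nn "[ll, X (Suc i)]" a] by simp
  have v: "?v < 2^length [ll, X (Suc i)]" using x unfolding Let_def by auto
  have G: "CNOT $$ (sub_index nn [ll, X (Suc i)] a, s) = (if s = ?v then 1 else 0)"
    if s: "s < 2^length [ll, X (Suc i)]" for s
    using cnot_entry[OF x, of s] s by (simp add: Let_def)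
  show ?thesis unfolding gX_def fx_def by (rule embed_perm[OF dlX nlX[OF i] M a b G v])
qed

lemma gQ_mult:
  assumes i: "i < kk" and M: "M \<in> carrier_mat (2^nn) k" and a: "a < 2^nn" and b: "b < k"
  shows "(gQ (Suc i) * M) $$ (a,b) = (\<Sum>s<2^w. Q $$ (sub_index nn (QR (Suc i)) a, s) * M $$ (upd nn (QR (Suc i)) a s, b))"
  unfolding gQ_def using embed_mult[OF dQR nQR[OF i] M a b, of Q] by simp

end


lemma cnv_bits: "q \<le> 1 \<Longrightarrow> x \<le> (1::nat) \<Longrightarrow>
  qbit (Suc (Suc 0)) (let y = 2 * q + x in if y < 2 then y else 5 - y) 0 = q \<and>
  qbit (Suc (Suc 0)) (let y = 2 * q + x in if y < 2 then y else 5 - y) (Suc 0) = (x + q) mod 2"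
proof -
  assume "q \<le> 1" "x \<le> 1"
  then have "q \<in> {0,1}" "x \<in> {0,1}" by auto
  then show ?thesis by (auto simp: qbit_def)
qed

context circ begin

lemma dc_bits: "t < nn \<Longrightarrow> qbit nn (dc a) t =
  (if t < ll then qbit ll ((cnt a + kk - qQ a) mod kk) t else qbit nn a t)"
proof -
  assume t: "t < nn"
  let ?c = "(cnt a + kk - qQ a) mod kk"
  have c: "?c < 2^ll" using K_pos K_pow by simp
  have q: "qQ a \<le> 1" by (rule qQ_le)
  show ?thesis
  proof (cases "t < ll")
    case True
    have "idx (ll # C) t = Suc t" using True idxC[OF True] by simp
    then show ?thesis unfolding dc_def cv_val using t True qbit_low[OF q c True]
      by (simp add: qbit_upd setC)
  next
    case False
    show ?thesis
    proof (cases "t = ll")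
      case True
      then show ?thesis unfolding dc_def cv_val using t qbit_top[OF q c, of] 
        by (simp add: qbit_upd setC qQ_def)
    next
      case False2: False
      then show ?thesis unfolding dc_def cv_val using t False by (simp add: qbit_upd setC)
    qed
  qed
qed

lemma cnt_dc: "cnt (dc a) = (cnt a + kk - qQ a) mod kk"
proof (rule cnt_bits)
  show "(cnt a + kk - qQ a) mod kk < kk" using K_pos by simp
  fix t assume t: "t < ll"
  then have "t < nn" by (simp add: nn_def)
  then show "qbit nn (dc a) t = qbit ll ((cnt a + kk - qQ a) mod kk) t" using t by (simp add: dc_bits)
qed

lemma ll_nn: "ll < nn" by (simp add: nn_def)

lemma qQ_dc: "qQ (dc a) = qQ a"
  unfolding qQ_def using dc_bits[OF ll_nn] by simp

lemma fx_bits: "i < kk \<Longrightarrow> t < nn \<Longrightarrow> qbit nn (fx (Suc i) a) t =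
  (if t = X (Suc i) then (xb (Suc i) a + qQ a) mod 2 else qbit nn a t)"
proof -
  assume i: "i < kk" and t: "t < nn"
  have ne: "X (Suc i) \<noteq> ll" using w1 by (simp add: XS)
  have e: "sub_index nn [ll, X (Suc i)] a = 2 * qQ a + xb (Suc i) a"
    by (simp add: sub_two qQ_def xb_def)
  note cb = cnv_bits[OF qQ_le[of a] xb_le[of "Suc i" a]]
  show ?thesis
    unfolding fx_def e using t ne cb by (auto simp: qbit_upd qQ_def)
qed

definition pre :: "nat \<Rightarrow> nat \<Rightarrow> nat" where "pre j a = fx j (dc a)"

lemma pre_bits: "i < kk \<Longrightarrow> t < nn \<Longrightarrow> qbit nn (pre (Suc i) a) t =
  (if t < ll then qbit ll ((cnt a + kk - qQ a) mod kk) t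
   else if t = X (Suc i) then (xb (Suc i) a + qQ a) mod 2 else qbit nn a t)"
proof -
  assume i: "i < kk" and t: "t < nn"
  have X: "ll < X (Suc i)" using w1 by (simp add: XS)
  have xd: "xb (Suc i) (dc a) = xb (Suc i) a"
    unfolding xb_def using dc_bits[OF nX[OF i]] X by simp
  show ?thesis unfolding pre_def fx_bits[OF i t] xd qQ_dc using dc_bits[OF t] X by auto
qed

lemma pre_lt: "pre j a < 2^nn" by (simp add: pre_def fx_def)

lemma gate_carrier: "gInc \<in> carrier_mat (2^nn) (2^nn)" "gQ j \<in> carrier_mat (2^nn) (2^nn)"
  "gX j \<in> carrier_mat (2^nn) (2^nn)" "gC \<in> carrier_mat (2^nn) (2^nn)"
  by (simp_all add: gInc_def gQ_def gX_def gC_def)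

lemma block_mult:
  assumes i: "i < kk" and M: "M \<in> carrier_mat (2^nn) (2^nn)" and a: "a < 2^nn" and b: "b < 2^nn"
  shows "(gC * (gX (Suc i) * (gQ (Suc i) * M))) $$ (a,b) =
    (\<Sum>s<2^w. Q $$ (sub_index nn (QR (Suc i)) a, s) * M $$ (upd nn (QR (Suc i)) (pre (Suc i) a) s, b))"
proof -
  have M1: "gQ (Suc i) * M \<in> carrier_mat (2^nn) (2^nn)" using gate_carrier M by (meson mult_carrier_mat)
  have M2: "gX (Suc i) * (gQ (Suc i) * M) \<in> carrier_mat (2^nn) (2^nn)" using gate_carrier M1 by (meson mult_carrier_mat)
  have dca: "dc a < 2^nn" by (simp add: dc_def)
  have "(gC * (gX (Suc i) * (gQ (Suc i) * M))) $$ (a,b) = (gX (Suc i) * (gQ (Suc i) * M)) $$ (dc a, b)"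
    by (rule gC_mult[OF M2 a b])
  also have "\<dots> = (gQ (Suc i) * M) $$ (pre (Suc i) a, b)"
    unfolding pre_def by (rule gX_mult[OF i M1 dca b])
  also have "\<dots> = (\<Sum>s<2^w. Q $$ (sub_index nn (QR (Suc i)) (pre (Suc i) a), s) * M $$ (upd nn (QR (Suc i)) (pre (Suc i) a) s, b))"
    by (rule gQ_mult[OF i M pre_lt b])
  also have "sub_index nn (QR (Suc i)) (pre (Suc i) a) = sub_index nn (QR (Suc i)) a"
  proof (rule sub_cong, rule ballI)
    fix t assume t: "t \<in> set (QR (Suc i))"
    then have tn: "t < nn" using nQR[OF i] by auto
    have "\<not> t < ll" "t \<noteq> X (Suc i)" using t w1 by (auto simp: setQR XS)
    then show "qbit nn (pre (Suc i) a) t = qbit nn a t" using pre_bits[OF i tn] by simp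
  qed
  finally show ?thesis .
qed

end


lemma rep_snoc: "replicate (Suc r) x = replicate r x @ [x]"
  by (simp add: replicate_append_same)

context circ begin

definition M0 where "M0 = circuit nn (replicate N gInc)"
definition Mb where "Mb j = foldl (\<lambda>M G. G * M) M0 (concat (map (\<lambda>j. [gQ j, gX j, gC]) [1..<j+1]))"

lemma R2_eq: "R2 N w Q = Mb kk"
proof -
  have l: "R2_l N = ll" by (simp add: R2_l_def ll_def Nm)
  have n: "R2_n N w = nn" by (simp add: R2_n_def l nn_def kk_def)
  have r: "R2_R N w = R" by (rule ext) (simp add: R2_R_def R_def l)
  have x: "R2_X N w = X" by (rule ext) (simp add: R2_X_def X_def l)
  have k: "8 * N = kk" by (simp add: kk_def)
  show ?thesis
    unfolding R2_def Let_def l n r x k circuit_def Mb_def M0_def gInc_def gQ_def gX_def gC_def C_def QR_def foldl_append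
    by (rule refl)
qed

lemma Mb_Suc: "Mb (Suc j) = gC * (gX (Suc j) * (gQ (Suc j) * Mb j))"
  unfolding Mb_def by simp

lemma M0_carrier: "M0 \<in> carrier_mat (2^nn) (2^nn)"
proof -
  have "foldl (\<lambda>M G. G * M) (1\<^sub>m (2^nn)) (replicate r gInc) \<in> carrier_mat (2^nn) (2^nn)" for r
    by (induction r) (auto simp: rep_snoc simp del: replicate_Suc intro!: mult_carrier_mat[OF gate_carrier(1)])
  then show ?thesis unfolding M0_def circuit_def .
qed

lemma Mb_carrier: "Mb j \<in> carrier_mat (2^nn) (2^nn)"
proof (induction j)
  case 0 then show ?case using M0_carrier by (simp add: Mb_def)
next
  case (Suc j) then show ?case unfolding Mb_Suc using gate_carrier by (meson mult_carrier_mat)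
qed

lemma a_eq_updC: "a < 2^nn \<Longrightarrow> v < kk \<Longrightarrow>
  (a = upd nn C b v) \<longleftrightarrow> (\<forall>t<nn. ll \<le> t \<longrightarrow> qbit nn a t = qbit nn b t) \<and> cnt a = v"
proof
  assume a: "a < 2^nn" and v: "v < kk" and e: "a = upd nn C b v"
  show "(\<forall>t<nn. ll \<le> t \<longrightarrow> qbit nn a t = qbit nn b t) \<and> cnt a = v"
    using e v by (auto simp: qbit_upd setC cnt_upd)
next
  assume a: "a < 2^nn" and v: "v < kk" and h: "(\<forall>t<nn. ll \<le> t \<longrightarrow> qbit nn a t = qbit nn b t) \<and> cnt a = v"
  show "a = upd nn C b v"
  proof (rule bits_eq[OF a upd_lt], intro allI impI)
    fix t assume t: "t < nn"
    show "qbit nn a t = qbit nn (upd nn C b v) t"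
    proof (cases "t < ll")
      case True
      have "qbit nn (upd nn C b v) t = qbit ll v t" using t True by (simp add: qbit_upd setC idxC)
      then show ?thesis using qbit_cnt[OF True, of a] h by simp
    next
      case False then show ?thesis using h t by (simp add: qbit_upd setC)
    qed
  qed
qed

lemma upd_C_eq: "a < 2^nn \<Longrightarrow> b < 2^nn \<Longrightarrow> v1 < kk \<Longrightarrow> v2 < kk \<Longrightarrow>
  (upd nn C a v1 = upd nn C b v2) \<longleftrightarrow> (\<forall>t<nn. ll \<le> t \<longrightarrow> qbit nn a t = qbit nn b t) \<and> v1 = v2"
proof -
  assume a: "a < 2^nn" and b: "b < 2^nn" and v: "v1 < kk" "v2 < kk"
  have "(upd nn C a v1 = upd nn C b v2) \<longleftrightarrow>
     (\<forall>t<nn. ll \<le> t \<longrightarrow> qbit nn (upd nn C a v1) t = qbit nn b t) \<and> cnt (upd nn C a v1) = v2"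
    by (rule a_eq_updC[OF upd_lt v(2)])
  also have "\<dots> \<longleftrightarrow> (\<forall>t<nn. ll \<le> t \<longrightarrow> qbit nn a t = qbit nn b t) \<and> v1 = v2"
    using v by (auto simp: qbit_upd setC cnt_upd)
  finally show ?thesis .
qed

lemma M0_entry: "a < 2^nn \<Longrightarrow> b < 2^nn \<Longrightarrow> M0 $$ (a,b) = (if a = upd nn C b ((cnt b + N) mod kk) then 1 else 0)"
proof -
  assume a: "a < 2^nn" and b: "b < 2^nn"
  have "\<forall>a<2^nn. foldl (\<lambda>M G. G * M) (1\<^sub>m (2^nn)) (replicate r gInc) $$ (a,b) =
     (if a = upd nn C b ((cnt b + r) mod kk) then 1 else 0)" for r
  proof (induction r)
    case 0
    have "upd nn C b (cnt b) = b" unfolding cnt_def using upd_sub[OF b nC] .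
    moreover have "cnt b mod kk = cnt b" using cnt_lt by simp
    ultimately show ?case using b by auto
  next
    case (Suc r)
    have P: "foldl (\<lambda>M G. G * M) (1\<^sub>m (2^nn)) (replicate r gInc) \<in> carrier_mat (2^nn) (2^nn)"
      by (induction r) (auto simp: rep_snoc simp del: replicate_Suc intro!: mult_carrier_mat[OF gate_carrier(1)])
    show ?case
    proof (intro allI impI)
      fix a :: nat assume a: "a < 2^nn"
      have "foldl (\<lambda>M G. G * M) (1\<^sub>m (2^nn)) (replicate (Suc r) gInc) $$ (a,b) =
         (gInc * foldl (\<lambda>M G. G * M) (1\<^sub>m (2^nn)) (replicate r gInc)) $$ (a,b)"
        by (simp only: rep_snoc foldl_append foldl.simps)
      also have "\<dots> = foldl (\<lambda>M G. G * M) (1\<^sub>m (2^nn)) (replicate r gInc) $$ (upd nn C a ((cnt a + kk - 1) mod kk), b)"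
        by (rule gInc_mult[OF P a b])
      also have "\<dots> = (if upd nn C a ((cnt a + kk - 1) mod kk) = upd nn C b ((cnt b + r) mod kk) then 1 else 0)"
        using Suc.IH by simp
      also have "(upd nn C a ((cnt a + kk - 1) mod kk) = upd nn C b ((cnt b + r) mod kk)) \<longleftrightarrow>
          (\<forall>t<nn. ll \<le> t \<longrightarrow> qbit nn a t = qbit nn b t) \<and> (cnt a + kk - 1) mod kk = (cnt b + r) mod kk"
        using K_pos by (intro upd_C_eq[OF a b]) auto
      also have "(cnt a + kk - 1) mod kk = (cnt b + r) mod kk \<longleftrightarrow> cnt a = (cnt b + Suc r) mod kk"
        using modK[OF K_pos cnt_lt[of a], of 1 "cnt b + r"] K_pos by simp
      also have "((\<forall>t<nn. ll \<le> t \<longrightarrow> qbit nn a t = qbit nn b t) \<and> cnt a = (cnt b + Suc r) mod kk) \<longleftrightarrow>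
          a = upd nn C b ((cnt b + Suc r) mod kk)"
        using K_pos by (intro a_eq_updC[OF a, symmetric]) auto
      finally show "foldl (\<lambda>M G. G * M) (1\<^sub>m (2^nn)) (replicate (Suc r) gInc) $$ (a,b) =
         (if a = upd nn C b ((cnt b + Suc r) mod kk) then 1 else 0)" .
    qed
  qed
  then show ?thesis using a unfolding M0_def circuit_def by simp
qed

end


context circ begin

definition xr :: "nat \<Rightarrow> nat \<Rightarrow> nat \<Rightarrow> nat" where "xr i b a = (if xb i a = xb i b then 0 else 1)"
definition hs :: "nat \<Rightarrow> nat \<Rightarrow> nat \<Rightarrow> nat" where "hs j b a = (\<Sum>i<j. xr (Suc i) b a)"
definition S :: "nat \<Rightarrow> nat \<Rightarrow> nat \<Rightarrow> bool" where
  "S j b a \<longleftrightarrow> (\<forall>t<nn. ll + j * w < t \<longrightarrow> qbit nn a t = qbit nn b t) \<and>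
     cnt a = (cnt b + N + hs j b a) mod kk \<and> qQ a = (if j = 0 then qQ b else xr j b a)"

lemma memQR: "t \<in> set (QR (Suc i)) \<longleftrightarrow> t = ll \<or> (ll + 1 + i * w \<le> t \<and> t < ll + i * w + w)"
  by (simp add: setQR)

lemma a'_bits: "i < kk \<Longrightarrow> t < nn \<Longrightarrow> t \<notin> set (QR (Suc i)) \<Longrightarrow>
  qbit nn (upd nn (QR (Suc i)) (pre (Suc i) a) s) t =
  (if t < ll then qbit ll ((cnt a + kk - qQ a) mod kk) t
   else if t = X (Suc i) then (xb (Suc i) a + qQ a) mod 2 else qbit nn a t)"
  by (simp add: qbit_upd pre_bits)

lemma xb_eq_cases: "(x::nat) \<le> 1 \<Longrightarrow> y \<le> 1 \<Longrightarrow> q \<le> 1 \<Longrightarrow> (x + q) mod 2 = y \<Longrightarrow> q = (if x = y then 0 else 1)"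
proof -
  assume "x \<le> 1" "y \<le> 1" "q \<le> 1" "(x + q) mod 2 = y"
  moreover have "x \<in> {0,1}" "y \<in> {0,1}" "q \<in> {0,1}" using calculation by auto
  ultimately show ?thesis by auto
qed

lemma supp: "j \<le> kk \<Longrightarrow> a < 2^nn \<Longrightarrow> b < 2^nn \<Longrightarrow> Mb j $$ (a,b) \<noteq> 0 \<Longrightarrow> S j b a"
proof (induction j arbitrary: a)
  case 0
  have e: "a = upd nn C b ((cnt b + N) mod kk)"
    using "0.prems" M0_entry[of a b] by (simp add: Mb_def split: if_splits)
  have v: "(cnt b + N) mod kk < kk" using K_pos by simp
  have f: "qbit nn a t = qbit nn b t" if "t < nn" "ll + 0 * w < t" for t
    using that unfolding e by (simp add: qbit_upd setC)
  have c0: "cnt a = (cnt b + N) mod kk" by (subst e) (rule cnt_upd[OF v])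
  have c: "cnt a = (cnt b + N + hs 0 b a) mod kk" using c0 by (simp add: hs_def)
  have q: "qQ a = qQ b" unfolding qQ_def e using ll_nn by (simp add: qbit_upd setC)
  show ?case unfolding S_def using f c q by simp
next
  case (Suc j)
  have j: "j < kk" using Suc.prems by simp
  note a = Suc.prems(2) and b = Suc.prems(3)
  let ?a' = "\<lambda>s. upd nn (QR (Suc j)) (pre (Suc j) a) s"
  have "(\<Sum>s<2^w. Q $$ (sub_index nn (QR (Suc j)) a, s) * Mb j $$ (?a' s, b)) \<noteq> 0"
    using Suc.prems(4) unfolding Mb_Suc block_mult[OF j Mb_carrier a b] .
  then obtain s where "Q $$ (sub_index nn (QR (Suc j)) a, s) * Mb j $$ (?a' s, b) \<noteq> 0"
    by (rule sum.not_neutral_contains_not_neutral)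
  then have "Mb j $$ (?a' s, b) \<noteq> 0" by simp
  then have Sj: "S j b (?a' s)" using Suc.IH[of "?a' s"] j b by simp
  have X1: "X (Suc j) = ll + j * w + w" by (rule XS)
  have bits: "qbit nn (?a' s) t = (if t < ll then qbit ll ((cnt a + kk - qQ a) mod kk) t
     else if t = X (Suc j) then (xb (Suc j) a + qQ a) mod 2 else qbit nn a t)"
    if "t < nn" "t \<notin> set (QR (Suc j))" for t using a'_bits[OF j that] .
  have Xn: "X (Suc j) < nn" by (rule nX[OF j])
  have XnQR: "X (Suc j) \<notin> set (QR (Suc j))" using w1 by (simp add: memQR X1)
  have xbS: "(xb (Suc j) a + qQ a) mod 2 = xb (Suc j) b"
    using Sj bits[OF Xn XnQR] Xn w1 unfolding S_def xb_def X1 by auto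
  have qx: "qQ a = xr (Suc j) b a"
    unfolding xr_def using xb_eq_cases[OF xb_le xb_le qQ_le xbS] .
  have hseq: "hs j b (?a' s) = hs j b a"
    unfolding hs_def
  proof (intro sum.cong refl)
    fix i assume i: "i \<in> {..<j}"
    have Xi: "X (Suc i) = ll + i * w + w" by (rule XS)
    have le: "i * w + w \<le> j * w" using i mult_le_aux2[of i j w] by simp
    have Xin: "X (Suc i) < nn" using nX[of i] i j by simp
    have "X (Suc i) \<notin> set (QR (Suc j))" "\<not> X (Suc i) < ll" "X (Suc i) \<noteq> X (Suc j)"
      using le w1 by (auto simp: memQR Xi X1)
    then show "xr (Suc i) b (?a' s) = xr (Suc i) b a"
      unfolding xr_def xb_def using bits[OF Xin] by simp
  qed
  have cnta': "cnt (?a' s) = (cnt a + kk - qQ a) mod kk"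
  proof (rule cnt_bits)
    show "(cnt a + kk - qQ a) mod kk < kk" using K_pos by simp
    fix t assume t: "t < ll"
    then have "t < nn" "t \<notin> set (QR (Suc j))" by (auto simp: memQR nn_def)
    then show "qbit nn (?a' s) t = qbit ll ((cnt a + kk - qQ a) mod kk) t" using bits t by simp
  qed
  have "(cnt a + kk - qQ a) mod kk = (cnt b + N + hs j b a) mod kk"
    using Sj unfolding S_def cnta' hseq by simp
  then have "cnt a = (cnt b + N + hs j b a + qQ a) mod kk"
    using modK[OF K_pos cnt_lt[of a], of "qQ a"] qQ_le[of a] K_pos by simp
  then have cnt: "cnt a = (cnt b + N + hs (Suc j) b a) mod kk"
    using qx by (simp add: hs_def add.assoc)
  have far: "qbit nn a t = qbit nn b t" if t: "t < nn" "ll + Suc j * w < t" for t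
  proof -
    have "t \<notin> set (QR (Suc j))" "\<not> t < ll" "t \<noteq> X (Suc j)" "ll + j * w < t"
      using t by (auto simp: memQR X1)
    then show ?thesis using Sj bits[OF t(1)] t(1) unfolding S_def by auto
  qed
  show ?case unfolding S_def using far cnt qx by auto
qed

end


lemma topbit_sum:
  assumes w: "1 \<le> w" and t: "t \<le> (1::nat)"
  shows "(\<Sum>s<2^w. if qbit w s 0 = t then f s else 0) = (\<Sum>r<2^(w-1). f (t * 2^(w-1) + r) :: real)"
proof -
  let ?h = "2^(w-1) :: nat"
  have hw: "2^w = 2 * ?h" using w by (simp add: power_eq_if)
  have q1: "qbit w s 0 = 0" if "s < ?h" for s using that w by (simp add: qbit_def)
  have q2: "qbit w (?h + r) 0 = 1" if "r < ?h" for r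
  proof -
    have "(?h + r) div ?h = 1" using that by simp
    then show ?thesis using w by (simp add: qbit_def)
  qed
  have "(\<Sum>s<2^w. if qbit w s 0 = t then f s else 0) =
     (\<Sum>s<?h. if qbit w s 0 = t then f s else 0) + (\<Sum>r<?h. if qbit w (?h + r) 0 = t then f (?h + r) else 0)"
    unfolding hw by (rule sum_split2)
  also have "\<dots> = (\<Sum>r<?h. f (t * ?h + r))"
  proof (cases "t = 0")
    case True then show ?thesis using q1 q2 by simp
  next
    case False then have "t = 1" using t by simp
    then show ?thesis using q1 q2 by simp
  qed
  finally show ?thesis .
qed

context circ begin

definition H :: "nat \<Rightarrow> nat \<Rightarrow> nat \<Rightarrow> nat \<Rightarrow> bool" where "H j b t a \<longleftrightarrow> (\<forall>i<j. xr (Suc i) b a = t)"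
definition Phi :: "nat \<Rightarrow> nat \<Rightarrow> nat \<Rightarrow> real" where
  "Phi j b t = (\<Sum>a<2^nn. if H j b t a then (cmod (Mb j $$ (a,b)))^2 else 0)"
definition qq :: "nat \<Rightarrow> nat \<Rightarrow> nat \<Rightarrow> nat" where "qq j b t = (if j = 0 then qQ b else t)"
definition s0 :: "nat \<Rightarrow> nat \<Rightarrow> nat \<Rightarrow> nat" where "s0 j b t = qq j b t * 2^(w-1) + sub_index nn (R (Suc j)) b"
definition A :: "nat \<Rightarrow> nat \<Rightarrow> nat \<Rightarrow> real" where
  "A q t r = (\<Sum>r'<2^(w-1). (cmod (Q $$ (t * 2^(w-1) + r', q * 2^(w-1) + r)))^2)"

lemma sub_QR: "sub_index nn (QR j) a = qQ a * 2^(w-1) + sub_index nn (R j) a"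
  by (simp add: QR_def sub_cons qQ_def)

lemma Xi_notQR: "i \<le> j \<Longrightarrow> X (Suc i) \<notin> set (QR (Suc j)) \<and> \<not> X (Suc i) < ll"
proof -
  assume i: "i \<le> j"
  have "i = j \<or> i * w + w \<le> j * w"
  proof (cases "i = j")
    case False then have "i < j" using i by simp
    then show ?thesis using mult_le_aux2[of i j w] by simp
  qed simp
  then show ?thesis using w1 by (auto simp: memQR XS)
qed

lemma Xi_ne: "i < j \<Longrightarrow> X (Suc i) \<noteq> X (Suc j)"
  using mult_le_aux2[of i j w] w1 by (auto simp: XS)

lemma xb_updQR: "i \<le> j \<Longrightarrow> j < kk \<Longrightarrow> xb (Suc i) (upd nn (QR (Suc j)) c s) = xb (Suc i) c"
proof -
  assume i: "i \<le> j" and j: "j < kk"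
  have "X (Suc i) < nn" using nX[of i] i j by simp
  then show ?thesis unfolding xb_def using Xi_notQR[OF i] by (simp add: qbit_upd)
qed

lemma xb_pre: "i < j \<Longrightarrow> j < kk \<Longrightarrow> xb (Suc i) (pre (Suc j) a) = xb (Suc i) a"
proof -
  assume i: "i < j" and j: "j < kk"
  have "X (Suc i) < nn" using nX[of i] i j by simp
  then show ?thesis unfolding xb_def using Xi_notQR[of i j] Xi_ne[OF i] i pre_bits[OF j] by simp
qed

lemma qQ_pre: "j < kk \<Longrightarrow> qQ (pre (Suc j) a) = qQ a"
  unfolding qQ_def using pre_bits[OF _ ll_nn, of j a] w1 by (simp add: XS)

lemma xbS_pre: "j < kk \<Longrightarrow> xb (Suc j) (pre (Suc j) a) = (xb (Suc j) a + qQ a) mod 2"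
  using pre_bits[OF _ nX, of j j a] w1 by (simp add: XS xb_def)

lemma sub_pre: "j < kk \<Longrightarrow> sub_index nn (QR (Suc j)) (pre (Suc j) a) = sub_index nn (QR (Suc j)) a"
proof (rule sub_cong, rule ballI)
  fix t assume j: "j < kk" and t: "t \<in> set (QR (Suc j))"
  then have tn: "t < nn" using nQR[OF j] by auto
  have "\<not> t < ll" "t \<noteq> X (Suc j)" using t w1 by (auto simp: setQR XS)
  then show "qbit nn (pre (Suc j) a) t = qbit nn a t" using pre_bits[OF j tn] by simp
qed

lemma qQ_updQR: "j < kk \<Longrightarrow> qQ (upd nn (QR (Suc j)) c s) = qbit w s 0"
proof -
  have "idx (QR (Suc j)) ll = 0" "ll \<in> set (QR (Suc j))" by (simp_all add: QR_def)
  then show ?thesis unfolding qQ_def using ll_nn by (simp add: qbit_upd)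
qed

lemma H_updQR: "j < kk \<Longrightarrow> H j b t (upd nn (QR (Suc j)) c s) = H j b t c"
  unfolding H_def xr_def using xb_updQR by simp

lemma H_pre: "j < kk \<Longrightarrow> H j b t (pre (Suc j) a) = H j b t a"
  unfolding H_def xr_def using xb_pre by simp

lemma s0_lt: "t \<le> 1 \<Longrightarrow> s0 j b t < 2^w"
proof -
  assume t: "t \<le> 1"
  have q: "qq j b t \<le> 1" using t qQ_le by (simp add: qq_def)
  have r: "sub_index nn (R (Suc j)) b < 2^(w-1)" using sub_lt[of nn "R (Suc j)" b] by simp
  have m: "qq j b t * 2^(w-1) \<le> 1 * 2^(w-1)" using q by (rule mult_le_mono1)
  have "s0 j b t < 2 * 2^(w-1)" unfolding s0_def using m r by linarith
  also have "\<dots> = 2^w" using w1 by (simp add: power_eq_if)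
  finally show ?thesis .
qed

lemma one_nz:
  assumes j: "j < kk" and t: "t \<le> 1" and c: "c < 2^nn" and b: "b < 2^nn"
    and h: "j = 0 \<or> H j b t c" and s: "s < 2^w"
    and nz: "Mb j $$ (upd nn (QR (Suc j)) c s, b) \<noteq> 0"
  shows "s = s0 j b t"
proof -
  let ?a = "upd nn (QR (Suc j)) c s"
  have Sa: "S j b ?a" using supp[of j ?a b] j b nz by simp
  have e1: "sub_index nn (QR (Suc j)) ?a = s" using sub_upd[OF dQR nQR[OF j]] s by simp
  have e2: "sub_index nn (R (Suc j)) ?a = sub_index nn (R (Suc j)) b"
  proof (rule sub_cong, rule ballI)
    fix t assume t: "t \<in> set (R (Suc j))"
    then have "t < nn" "ll + j * w < t" using nR[OF j] by (auto simp: setR)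
    then show "qbit nn ?a t = qbit nn b t" using Sa unfolding S_def by auto
  qed
  have e3: "qQ ?a = qq j b t"
  proof (cases j)
    case 0 then show ?thesis using Sa unfolding S_def qq_def by simp
  next
    case (Suc j')
    have "xr j b ?a = xr j b c" unfolding xr_def Suc using xb_updQR[of j' j c s] j Suc by simp
    also have "\<dots> = t" using h Suc unfolding H_def by simp
    finally show ?thesis using Sa Suc unfolding S_def qq_def by simp
  qed
  show ?thesis using sub_QR[of "Suc j" ?a] e1 e2 e3 by (simp add: s0_def)
qed

end


lemma mod2_cancel: "(x::nat) \<le> 1 \<Longrightarrow> y \<le> 1 \<Longrightarrow> q \<le> 1 \<Longrightarrow> (x + q) mod 2 = (y + q) mod 2 \<Longrightarrow> x = y"
proof -
  assume "x \<le> 1" "y \<le> 1" "q \<le> 1" "(x + q) mod 2 = (y + q) mod 2"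
  moreover have "x \<in> {0,1}" "y \<in> {0,1}" "q \<in> {0,1}" using calculation by auto
  ultimately show ?thesis by auto
qed

context circ begin

lemma pre_inj: "j < kk \<Longrightarrow> inj_on (pre (Suc j)) {..<2^nn}"
proof (rule inj_onI)
  fix a a' assume j: "j < kk" and a: "a \<in> {..<2^nn}" and a': "a' \<in> {..<2^nn}" and e: "pre (Suc j) a = pre (Suc j) a'"
  have q: "qQ a = qQ a'" using qQ_pre[OF j, of a] qQ_pre[OF j, of a'] e by simp
  let ?y = "(cnt a + kk - qQ a) mod kk" and ?y' = "(cnt a' + kk - qQ a) mod kk"
  have yy: "?y = ?y'"
  proof (rule bits_eq[of _ ll])
    show "?y < 2^ll" "?y' < 2^ll" using K_pos K_pow by simp_all
    show "\<forall>t<ll. qbit ll ?y t = qbit ll ?y' t"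
    proof (intro allI impI)
      fix t assume t: "t < ll"
      then have tn: "t < nn" by (simp add: nn_def)
      show "qbit ll ?y t = qbit ll ?y' t" using pre_bits[OF j tn, of a] pre_bits[OF j tn, of a'] e q t by simp
    qed
  qed
  have c1: "cnt a = (?y + qQ a) mod kk"
    using modK[OF K_pos cnt_lt[of a], of "qQ a" ?y] qQ_le[of a] K_pos by simp
  have c2: "cnt a' = (?y' + qQ a) mod kk"
    using modK[OF K_pos cnt_lt[of a'], of "qQ a" ?y'] qQ_le[of a] K_pos by simp
  have c: "cnt a = cnt a'" using c1 c2 yy by simp
  have x: "xb (Suc j) a = xb (Suc j) a'"
    using xbS_pre[OF j, of a] xbS_pre[OF j, of a'] e q by (intro mod2_cancel[OF xb_le xb_le qQ_le[of a]]) simp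
  show "a = a'"
  proof (rule bits_eq[of _ nn])
    show "a < 2^nn" "a' < 2^nn" using a a' by auto
    show "\<forall>t<nn. qbit nn a t = qbit nn a' t"
    proof (intro allI impI)
      fix t assume t: "t < nn"
      show "qbit nn a t = qbit nn a' t"
      proof (cases "t < ll")
        case True then show ?thesis using qbit_cnt[OF True, of a] qbit_cnt[OF True, of a'] c by simp
      next
        case False
        show ?thesis
        proof (cases "t = X (Suc j)")
          case True then show ?thesis using x by (simp add: xb_def)
        next
          case False2: False
          then show ?thesis using pre_bits[OF j t, of a] pre_bits[OF j t, of a'] e False by simp
        qed
      qed
    qed
  qed
qed

lemma pre_image: "j < kk \<Longrightarrow> pre (Suc j) ` {..<2^nn} = {..<2^nn}"
  by (rule endo_inj_surj) (auto simp: pre_lt pre_inj)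

end


lemma mod2_twice: "(x::nat) \<le> 1 \<Longrightarrow> q \<le> 1 \<Longrightarrow> ((x + q) mod 2 + q) mod 2 = x"
proof -
  assume "x \<le> 1" "q \<le> 1"
  moreover have "x \<in> {0,1}" "q \<in> {0,1}" using calculation by auto
  ultimately show ?thesis by auto
qed

lemma mod2_self: "(x::nat) \<le> 1 \<Longrightarrow> q \<le> 1 \<Longrightarrow> (if (x + q) mod 2 = x then 0 else 1) = q"
proof -
  assume "x \<le> 1" "q \<le> 1"
  moreover have "x \<in> {0,1}" "q \<in> {0,1}" using calculation by auto
  ultimately show ?thesis by auto
qed

context circ begin

lemma H_Suc: "H (Suc j) b t a \<longleftrightarrow> H j b t a \<and> xr (Suc j) b a = t"
  unfolding H_def less_Suc_eq by auto

lemma Phi_Suc: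
  assumes j: "j < kk" and t: "t \<le> 1" and b: "b < 2^nn"
  shows "Phi (Suc j) b t = A (qq j b t) t (sub_index nn (R (Suc j)) b) * Phi j b t"
proof -
  let ?s0 = "s0 j b t"
  let ?QR = "QR (Suc j)"
  let ?Z = "{z. z<2^nn \<and> sub_index nn ?QR z = 0}"
  have s0w: "?s0 < 2^w" using t by (rule s0_lt)
  define xr' where "xr' c = (if (xb (Suc j) c + qQ c) mod 2 = xb (Suc j) b then 0 else (1::nat))" for c
  define F where "F c = (if H j b t c \<and> xr' c = t then
      (cmod (Q $$ (sub_index nn ?QR c, ?s0)))^2 * (cmod (Mb j $$ (upd nn ?QR c ?s0, b)))^2 else 0)" for c
  define G where "G z = (if H j b t z then (cmod (Mb j $$ (upd nn ?QR z ?s0, b)))^2 else 0)" for z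
  define g where "g s = (if qbit w s 0 = t then (cmod (Q $$ (s, ?s0)))^2 else 0)" for s
  have entry: "Mb (Suc j) $$ (a,b) = Q $$ (sub_index nn ?QR a, ?s0) * Mb j $$ (upd nn ?QR (pre (Suc j) a) ?s0, b)"
    if a: "a < 2^nn" and h: "H (Suc j) b t a" for a
  proof -
    have hp: "j = 0 \<or> H j b t (pre (Suc j) a)" using h H_Suc H_pre[OF j] by simp
    have "Mb (Suc j) $$ (a,b) = (\<Sum>s<2^w. Q $$ (sub_index nn ?QR a, s) * Mb j $$ (upd nn ?QR (pre (Suc j) a) s, b))"
      unfolding Mb_Suc by (rule block_mult[OF j Mb_carrier a b])
    also have "\<dots> = Q $$ (sub_index nn ?QR a, ?s0) * Mb j $$ (upd nn ?QR (pre (Suc j) a) ?s0, b)"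
    proof (rule sum_single)
      show "finite {..<(2::nat)^w}" by simp
      show "?s0 \<in> {..<2^w}" using s0w by simp
      fix s assume s: "s \<in> {..<2^w}" "s \<noteq> ?s0"
      have "Mb j $$ (upd nn ?QR (pre (Suc j) a) s, b) = 0"
        using one_nz[OF j t pre_lt b hp, of s] s by auto
      then show "Q $$ (sub_index nn ?QR a, s) * Mb j $$ (upd nn ?QR (pre (Suc j) a) s, b) = 0" by simp
    qed
    finally show ?thesis .
  qed
  have xr'_pre: "xr' (pre (Suc j) a) = xr (Suc j) b a" for a
    unfolding xr'_def xr_def xbS_pre[OF j] qQ_pre[OF j] mod2_twice[OF xb_le qQ_le] by simp
  have step1: "Phi (Suc j) b t = (\<Sum>a<2^nn. F (pre (Suc j) a))"
    unfolding Phi_def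
  proof (intro sum.cong refl)
    fix a assume a: "a \<in> {..<(2::nat)^nn}"
    have c: "H j b t (pre (Suc j) a) \<and> xr' (pre (Suc j) a) = t \<longleftrightarrow> H (Suc j) b t a"
      using H_pre[OF j] xr'_pre H_Suc by simp
    show "(if H (Suc j) b t a then (cmod (Mb (Suc j) $$ (a,b)))^2 else 0) = F (pre (Suc j) a)"
      using entry[of a] a c unfolding F_def sub_pre[OF j] by (simp add: norm_mult power_mult_distrib)
  qed
  have step2: "(\<Sum>a<2^nn. F (pre (Suc j) a)) = (\<Sum>c<2^nn. F c)"
  proof -
    have "(\<Sum>c<2^nn. F c) = (\<Sum>c\<in>pre (Suc j) ` {..<2^nn}. F c)" using pre_image[OF j] by simp
    also have "\<dots> = (\<Sum>a<2^nn. F (pre (Suc j) a))" using pre_inj[OF j] by (simp add: sum.reindex)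
    finally show ?thesis by simp
  qed
  have step3: "(\<Sum>c<2^nn. F c) = (\<Sum>z\<in>?Z. \<Sum>s<2^w. F (upd nn ?QR z s))"
    using sum_decomp[OF dQR nQR[OF j], of F] by simp
  have step4: "F (upd nn ?QR z s) = G z * g s" if z: "z \<in> ?Z" and s: "s < 2^w" for z s
  proof -
    have e1: "H j b t (upd nn ?QR z s) = H j b t z" by (rule H_updQR[OF j])
    have e2: "sub_index nn ?QR (upd nn ?QR z s) = s" using sub_upd[OF dQR nQR[OF j]] s by simp
    have e3: "upd nn ?QR (upd nn ?QR z s) ?s0 = upd nn ?QR z ?s0" by (rule upd_upd)
    have e4: "xb (Suc j) (upd nn ?QR z s) = xb (Suc j) z" using xb_updQR[of j j z s] j by simp
    have e5: "qQ (upd nn ?QR z s) = qbit w s 0" by (rule qQ_updQR[OF j])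
    show ?thesis
    proof (cases "Mb j $$ (upd nn ?QR z ?s0, b) = 0")
      case True then show ?thesis unfolding F_def G_def e1 e2 e3 by simp
    next
      case False
      have Sz: "S j b (upd nn ?QR z ?s0)" using supp[of j "upd nn ?QR z ?s0" b] j b False by simp
      have Xn: "X (Suc j) < nn" by (rule nX[OF j])
      have "ll + j * w < X (Suc j)" using w1 by (simp add: XS)
      then have "xb (Suc j) (upd nn ?QR z ?s0) = xb (Suc j) b" using Sz Xn unfolding S_def xb_def by auto
      then have xz: "xb (Suc j) z = xb (Suc j) b" using xb_updQR[of j j z ?s0] j by simp
      have "xr' (upd nn ?QR z s) = qbit w s 0"
        unfolding xr'_def e4 e5 xz using mod2_self[OF xb_le qbit_le1] by simp
      then show ?thesis unfolding F_def G_def g_def e1 e2 e3 by auto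
    qed
  qed
  have step5: "(\<Sum>z\<in>?Z. \<Sum>s<2^w. F (upd nn ?QR z s)) = (\<Sum>z\<in>?Z. G z) * (\<Sum>s<2^w. g s)"
  proof -
    have "(\<Sum>z\<in>?Z. \<Sum>s<2^w. F (upd nn ?QR z s)) = (\<Sum>z\<in>?Z. \<Sum>s<2^w. G z * g s)"
      by (intro sum.cong refl) (use step4 in auto)
    also have "\<dots> = (\<Sum>z\<in>?Z. G z * (\<Sum>s<2^w. g s))" by (simp only: sum_distrib_left)
    also have "\<dots> = (\<Sum>z\<in>?Z. G z) * (\<Sum>s<2^w. g s)" by (simp only: sum_distrib_right)
    finally show ?thesis .
  qed
  have step6: "(\<Sum>s<2^w. g s) = A (qq j b t) t (sub_index nn (R (Suc j)) b)"
    unfolding g_def A_def using topbit_sum[OF w1 t, of "\<lambda>s. (cmod (Q $$ (s, ?s0)))^2"] by (simp add: s0_def)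
  have step7: "Phi j b t = (\<Sum>z\<in>?Z. G z)"
  proof -
    have "Phi j b t = (\<Sum>z\<in>?Z. \<Sum>s<2^w. (\<lambda>c. if H j b t c then (cmod (Mb j $$ (c,b)))^2 else 0) (upd nn ?QR z s))"
      unfolding Phi_def using sum_decomp[OF dQR nQR[OF j]] by simp
    also have "\<dots> = (\<Sum>z\<in>?Z. G z)"
    proof (intro sum.cong refl)
      fix z assume z: "z \<in> ?Z"
      show "(\<Sum>s<2^w. (\<lambda>c. if H j b t c then (cmod (Mb j $$ (c,b)))^2 else 0) (upd nn ?QR z s)) = G z"
      proof -
        have "(\<Sum>s<2^w. (\<lambda>c. if H j b t c then (cmod (Mb j $$ (c,b)))^2 else 0) (upd nn ?QR z s)) =
           (\<lambda>c. if H j b t c then (cmod (Mb j $$ (c,b)))^2 else 0) (upd nn ?QR z ?s0)"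
        proof (rule sum_single)
          show "finite {..<(2::nat)^w}" by simp
          show "?s0 \<in> {..<2^w}" using s0w by simp
          fix s assume s: "s \<in> {..<2^w}" "s \<noteq> ?s0"
          show "(\<lambda>c. if H j b t c then (cmod (Mb j $$ (c,b)))^2 else 0) (upd nn ?QR z s) = 0"
          proof (cases "H j b t z")
            case True
            have "Mb j $$ (upd nn ?QR z s, b) = 0"
              using one_nz[OF j t _ b _, of z s] z s True by auto
            then show ?thesis by simp
          next
            case False then show ?thesis using H_updQR[OF j] by simp
          qed
        qed
        also have "\<dots> = G z" unfolding G_def using H_updQR[OF j] by simp
        finally show ?thesis .
      qed
    qed
    finally show ?thesis .
  qed
  show ?thesis using step1 step2 step3 step5 step6 step7 by simp
qed

end


context circ begin

lemma Phi_0: "b < 2^nn \<Longrightarrow> Phi 0 b t = 1"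
proof -
  assume b: "b < 2^nn"
  let ?b0 = "upd nn C b ((cnt b + N) mod kk)"
  have "Phi 0 b t = (\<Sum>a<2^nn. (cmod (M0 $$ (a,b)))^2)" unfolding Phi_def H_def by (simp add: Mb_def)
  also have "\<dots> = (cmod (M0 $$ (?b0,b)))^2"
  proof (rule sum_single)
    show "finite {..<(2::nat)^nn}" by simp
    show "?b0 \<in> {..<2^nn}" by simp
    fix a assume "a \<in> {..<(2::nat)^nn}" "a \<noteq> ?b0"
    then show "(cmod (M0 $$ (a,b)))^2 = 0" using M0_entry[of a b] b by simp
  qed
  also have "\<dots> = 1" using M0_entry[of ?b0 b] b by simp
  finally show ?thesis .
qed

definition phi :: "nat \<Rightarrow> nat \<Rightarrow> nat \<Rightarrow> real" where
  "phi j b t = (\<Prod>i<j. A (qq i b t) t (sub_index nn (R (Suc i)) b))"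

lemma Phi_phi: "j \<le> kk \<Longrightarrow> t \<le> 1 \<Longrightarrow> b < 2^nn \<Longrightarrow> Phi j b t = phi j b t"
proof (induction j)
  case 0 then show ?case using Phi_0 by (simp add: phi_def)
next
  case (Suc j)
  then have "Phi (Suc j) b t = A (qq j b t) t (sub_index nn (R (Suc j)) b) * Phi j b t"
    by (intro Phi_Suc) auto
  then show ?case using Suc by (simp add: phi_def)
qed

lemma phi_upd: "Suc j < kk \<Longrightarrow> phi (Suc j) (upd nn (R (Suc (Suc j))) b s) t = phi (Suc j) b t"
  unfolding phi_def
proof (intro prod.cong refl)
  fix i assume j: "Suc j < kk" and i: "i \<in> {..<Suc j}"
  let ?b = "upd nn (R (Suc (Suc j))) b s"
  have ll: "ll \<notin> set (R (Suc (Suc j)))" by (simp add: setR)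
  have qq: "qq i ?b t = qq i b t" unfolding qq_def qQ_def using ll ll_nn by (simp add: qbit_upd)
  have le: "i * w + w \<le> Suc j * w" using i mult_le_aux2[of i "Suc j" w] by simp
  have sb: "sub_index nn (R (Suc i)) ?b = sub_index nn (R (Suc i)) b"
  proof (rule sub_cong, rule ballI)
    fix t assume t: "t \<in> set (R (Suc i))"
    have "t < nn" using t nR[of i] i j by auto
    moreover have "t \<notin> set (R (Suc (Suc j)))"
    proof -
      have t1: "t < ll + i * w + w" using t by (simp add: setR)
      have le2: "i * w + w \<le> w + j * w" using le by simp
      show ?thesis unfolding setR mem_Collect_eq mult_Suc using t1 le2 by linarith
    qed
    ultimately show "qbit nn ?b t = qbit nn b t" by (simp add: qbit_upd)
  qed
  show "A (qq i ?b t) t (sub_index nn (R (Suc i)) ?b) = A (qq i b t) t (sub_index nn (R (Suc i)) b)"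
    using qq sb by simp
qed

end


context circ begin

definition pp :: real where "pp = p_acc w Q 1"

lemma hw: "(2::nat)^w = 2 * 2^(w-1)" using w1 by (simp add: power_eq_if)

lemma Qc: "Q \<in> carrier_mat (2^w) (2^w)" using QU by (simp add: unitary_mat_def)

lemma pp_M00: "pp = (\<Sum>r<2^(w-1). A 0 0 r) / 2^(w-1)"
proof -
  let ?h = "2^(w-1) :: nat"
  have "pp = (\<Sum>a<2^w. \<Sum>b<2^w. (if qbit w a 0 = 0 \<and> qbit w b 0 = 0 then 1 / 2^(w-1) else 0) * (cmod (Q $$ (a,b)))^2)"
    unfolding pp_def p_acc_formula[OF Qc] by simp
  also have "\<dots> = (\<Sum>a<2^w. if qbit w a 0 = 0 then (\<Sum>b<2^w. if qbit w b 0 = 0 then (cmod (Q $$ (a,b)))^2 / 2^(w-1) else 0) else 0)"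
    by (intro sum.cong refl) (auto intro!: sum.cong)
  also have "\<dots> = (\<Sum>r'<?h. (\<Sum>b<2^w. if qbit w b 0 = 0 then (cmod (Q $$ (r',b)))^2 / 2^(w-1) else 0))"
    using topbit_sum[OF w1, of 0] by simp
  also have "\<dots> = (\<Sum>r'<?h. \<Sum>r<?h. (cmod (Q $$ (r',r)))^2 / 2^(w-1))"
    using topbit_sum[OF w1, of 0] by simp
  also have "\<dots> = (\<Sum>r<?h. \<Sum>r'<?h. (cmod (Q $$ (r',r)))^2) / 2^(w-1)"
    by (subst sum.swap) (simp add: sum_divide_distrib)
  also have "\<dots> = (\<Sum>r<?h. A 0 0 r) / 2^(w-1)" by (simp add: A_def)
  finally show ?thesis .
qed

lemma A11_A00: "(\<Sum>r<2^(w-1). A 1 1 r) = (\<Sum>r<2^(w-1). A 0 0 r)"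
proof -
  let ?h = "2^(w-1) :: nat"
  let ?f = "\<lambda>a b. (cmod (Q $$ (a,b)))^2"
  have col: "(\<Sum>r'<?h. ?f r' r) + (\<Sum>r'<?h. ?f (?h + r') r) = 1" if "r < ?h" for r
  proof -
    have "r < 2^w" using that hw by simp
    then have "(\<Sum>a<2^w. ?f a r) = 1" by (rule col_norm[OF QU])
    then show ?thesis unfolding hw sum_split2 .
  qed
  have row: "(\<Sum>r<?h. ?f (?h + r') r) + (\<Sum>r<?h. ?f (?h + r') (?h + r)) = 1" if "r' < ?h" for r'
  proof -
    have "?h + r' < 2^w" using that hw by simp
    then have "(\<Sum>b<2^w. ?f (?h + r') b) = 1" by (rule row_norm[OF QU])
    then show ?thesis unfolding hw sum_split2 .
  qed
  have s1: "(\<Sum>r<?h. \<Sum>r'<?h. ?f r' r) + (\<Sum>r<?h. \<Sum>r'<?h. ?f (?h + r') r) = ?h"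
  proof -
    have "(\<Sum>r<?h. (\<Sum>r'<?h. ?f r' r) + (\<Sum>r'<?h. ?f (?h + r') r)) = (\<Sum>r<?h. (1::real))"
      by (intro sum.cong refl) (use col in auto)
    then show ?thesis by (simp only: sum.distrib) simp
  qed
  have s2: "(\<Sum>r'<?h. \<Sum>r<?h. ?f (?h + r') r) + (\<Sum>r'<?h. \<Sum>r<?h. ?f (?h + r') (?h + r)) = ?h"
  proof -
    have "(\<Sum>r'<?h. (\<Sum>r<?h. ?f (?h + r') r) + (\<Sum>r<?h. ?f (?h + r') (?h + r))) = (\<Sum>r'<?h. (1::real))"
      by (intro sum.cong refl) (use row in auto)
    then show ?thesis by (simp only: sum.distrib) simp
  qed
  have sw: "(\<Sum>r<?h. \<Sum>r'<?h. ?f (?h + r') r) = (\<Sum>r'<?h. \<Sum>r<?h. ?f (?h + r') r)" by (rule sum.swap)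
  have sw2: "(\<Sum>r<?h. A 1 1 r) = (\<Sum>r'<?h. \<Sum>r<?h. ?f (?h + r') (?h + r))"
    unfolding A_def by (simp, rule sum.swap)
  have e0: "(\<Sum>r<?h. A 0 0 r) = (\<Sum>r<?h. \<Sum>r'<?h. ?f r' r)" unfolding A_def by simp
  show ?thesis using s1 s2 sw sw2 e0 by linarith
qed

lemma Att: "t \<le> 1 \<Longrightarrow> (\<Sum>r<2^(w-1). A t t r) = 2^(w-1) * pp"
proof -
  assume t: "t \<le> 1"
  have "(\<Sum>r<2^(w-1). A t t r) = (\<Sum>r<2^(w-1). A 0 0 r)"
  proof (cases "t = 0")
    case False then have "t = 1" using t by simp
    then show ?thesis using A11_A00 by simp
  qed simp
  then show ?thesis using pp_M00 by simp
qed

lemma Abase: "t \<le> 1 \<Longrightarrow> (\<Sum>x<2^w. A (x div 2^(w-1)) t (x mod 2^(w-1))) = 2^(w-1)"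
proof -
  assume t: "t \<le> 1"
  let ?h = "2^(w-1) :: nat"
  have "(\<Sum>x<2^w. A (x div ?h) t (x mod ?h)) = (\<Sum>x<2^w. \<Sum>r'<?h. (cmod (Q $$ (t * ?h + r', x)))^2)"
    unfolding A_def by (simp add: div_mult_mod_eq)
  also have "\<dots> = (\<Sum>r'<?h. \<Sum>x<2^w. (cmod (Q $$ (t * ?h + r', x)))^2)" by (rule sum.swap)
  also have "\<dots> = (\<Sum>r'<?h. 1)"
  proof (intro sum.cong refl row_norm[OF QU])
    fix r' assume r': "r' \<in> {..<?h}"
    have m: "t * ?h \<le> 1 * ?h" using t by (rule mult_le_mono1)
    have r'': "r' < ?h" using r' by simp
    show "t * ?h + r' < 2^w" unfolding hw using m r'' by linarith
  qed
  finally show ?thesis by simp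
qed

end


context circ begin

definition PB :: "nat \<Rightarrow> bool" where "PB b \<longleftrightarrow> qbit nn b 0 = 0 \<and> qbit nn b 1 = 0"

lemma PB_upd: "0 \<notin> set qs \<Longrightarrow> 1 \<notin> set qs \<Longrightarrow> PB (upd nn qs b s) = PB b"
proof -
  assume "0 \<notin> set qs" "1 \<notin> set qs"
  moreover have "0 < nn" "1 < nn" using ll3 by (simp_all add: nn_def)
  ultimately show ?thesis unfolding PB_def by (simp add: qbit_upd)
qed

lemma sumB:
  assumes j: "j < kk" and t: "t \<le> 1"
  shows "(\<Sum>b\<in>{b. b<2^nn \<and> PB b}. phi (Suc j) b t) = pp^j / 2 * (\<Sum>b\<in>{b. b<2^nn \<and> PB b}. 1)"
  using j
proof (induction j)
  case 0
  let ?h = "2^(w-1) :: nat"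
  let ?F = "\<lambda>x. A (x div ?h) t (x mod ?h)"
  have k0: "0 < kk" using K_pos .
  have e: "phi (Suc 0) b t = ?F (sub_index nn (QR (Suc 0)) b) * 1" for b
  proof -
    have r: "sub_index nn (R (Suc 0)) b < ?h" using sub_lt[of nn "R (Suc 0)" b] by simp
    have "sub_index nn (QR (Suc 0)) b div ?h = qQ b" "sub_index nn (QR (Suc 0)) b mod ?h = sub_index nn (R (Suc 0)) b"
      unfolding sub_QR using r by simp_all
    then show ?thesis by (simp add: phi_def qq_def)
  qed
  have n01: "0 \<notin> set (QR (Suc 0))" "1 \<notin> set (QR (Suc 0))" using ll3 by (auto simp: memQR)
  have "(\<Sum>b\<in>{b. b<2^nn \<and> PB b}. phi (Suc 0) b t) = (\<Sum>b\<in>{b. b<2^nn \<and> PB b}. ?F (sub_index nn (QR (Suc 0)) b) * 1)"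
    using e by simp
  also have "\<dots> = (\<Sum>s<2^length (QR (Suc 0)). ?F s) / 2^length (QR (Suc 0)) * (\<Sum>b\<in>{b. b<2^nn \<and> PB b}. 1)"
    by (rule sum_avg[OF dQR nQR[OF k0]]) (use PB_upd[OF n01] in auto)
  also have "(\<Sum>s<2^length (QR (Suc 0)). ?F s) = ?h" using Abase[OF t] by simp
  also have "real ?h / 2^length (QR (Suc 0)) = 1/2"
  proof -
    have "(2::real)^w = 2 * 2^(w-1)" using w1 by (simp add: power_eq_if)
    then show ?thesis by simp
  qed
  finally show ?case by simp
next
  case (Suc j)
  let ?h = "2^(w-1) :: nat"
  have j: "j < kk" using Suc.prems by simp
  have e: "phi (Suc (Suc j)) b t = A t t (sub_index nn (R (Suc (Suc j))) b) * phi (Suc j) b t" for b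
    unfolding phi_def by (simp add: qq_def)
  have n01: "0 \<notin> set (R (Suc (Suc j)))" "1 \<notin> set (R (Suc (Suc j)))" using ll3 by (auto simp: setR)
  have "(\<Sum>b\<in>{b. b<2^nn \<and> PB b}. phi (Suc (Suc j)) b t) =
      (\<Sum>b\<in>{b. b<2^nn \<and> PB b}. A t t (sub_index nn (R (Suc (Suc j))) b) * phi (Suc j) b t)"
    using e by simp
  also have "\<dots> = (\<Sum>s<2^length (R (Suc (Suc j))). A t t s) / 2^length (R (Suc (Suc j))) *
      (\<Sum>b\<in>{b. b<2^nn \<and> PB b}. phi (Suc j) b t)"
    by (rule sum_avg[OF dR nR[OF Suc.prems]]) (use PB_upd[OF n01] phi_upd[OF Suc.prems] in auto)
  also have "(\<Sum>s<2^length (R (Suc (Suc j))). A t t s) / 2^length (R (Suc (Suc j))) = pp"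
    using Att[OF t] by simp
  also have "(\<Sum>b\<in>{b. b<2^nn \<and> PB b}. phi (Suc j) b t) = pp^j / 2 * (\<Sum>b\<in>{b. b<2^nn \<and> PB b}. 1)"
    using Suc.IH j by simp
  finally show ?case by simp
qed

lemma countB: "(\<Sum>b\<in>{b. b<2^nn \<and> PB b}. (1::real)) = 2^(nn-2)"
proof -
  have d: "distinct [0::nat, 1]" by simp
  have q: "set [0::nat, 1] \<subseteq> {..<nn}" using ll3 by (auto simp: nn_def)
  have e: "PB b \<longleftrightarrow> sub_index nn [0,1] b = 0" for b
    unfolding PB_def sub_two by auto
  have "(\<Sum>b\<in>{b. b<2^nn \<and> PB b}. (1::real)) = (\<Sum>b\<in>{b. b<2^nn \<and> True}. (if sub_index nn [0,1] b = 0 then 1 else 0) * 1)"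
    unfolding filt_sum e by simp
  also have "\<dots> = (\<Sum>s<(2::nat)^length [0::nat,1]. (if s = 0 then 1 else (0::real))) / 2^length [0::nat,1] * (\<Sum>b\<in>{b. b<(2::nat)^nn \<and> True}. (1::real))"
    by (rule sum_avg[OF d q]) auto
  also have "\<dots> = 2^nn / 4" by simp
  also have "\<dots> = 2^(nn-2)"
  proof -
    have "nn = (nn - 2) + 2" using ll3 by (simp add: nn_def)
    then have "(2::real)^nn = 2^(nn-2) * 4" by (metis power_add power2_eq_square mult_2 numeral_Bit0 power_numeral)
    then show ?thesis by simp
  qed
  finally show ?thesis .
qed

end


context circ begin

lemma low2: "c < kk \<Longrightarrow> qbit ll c 0 = 0 \<Longrightarrow> qbit ll c 1 = 0 \<Longrightarrow> c < 2 * N"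
proof -
  assume c: "c < kk" and q0: "qbit ll c 0 = 0" and q1: "qbit ll c 1 = 0"
  have p1: "(2::nat)^(ll - 1 - 1) = 2 * N" using Nm by (simp add: ll_def)
  have p0: "(2::nat)^(ll - 1 - 0) = 2 * N * 2" using Nm by (simp add: ll_def)
  let ?y = "c div (2 * N)"
  have N0: "0 < N" using Nm by simp
  have y4: "?y < 4" using c N0 by (simp add: kk_def div_less_iff_less_mult)
  have "c div 2^(ll-1-1) mod 2 = 0" using q1 unfolding qbit_def .
  then have a: "?y mod 2 = 0" unfolding p1 .
  have e: "c div (2 * N * 2) = ?y div 2" by (rule div_mult2_eq)
  have "c div 2^(ll-1-0) mod 2 = 0" using q0 unfolding qbit_def .
  then have b: "?y div 2 mod 2 = 0" unfolding p0 e .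
  have "?y = 0"
  proof -
    have "?y \<in> {0,1,2,3}" using y4 by auto
    then show ?thesis using a b by auto
  qed
  then show ?thesis using N0 by (simp add: div_eq_0_iff)
qed

lemma accept:
  assumes b: "b < 2^nn" and pb: "PB b" and a: "a < 2^nn" and nz: "Mb kk $$ (a,b) \<noteq> 0"
    and h: "H kk b t a" and t: "t \<le> 1"
  shows "qbit nn a 0 = 0"
proof -
  have Sa: "S kk b a" using supp[of kk a b] a b nz by simp
  have "hs kk b a = (\<Sum>i<kk. t)" unfolding hs_def by (rule sum.cong) (use h in \<open>auto simp: H_def\<close>)
  then have hs: "hs kk b a = kk * t" by simp
  have c1: "cnt a = (cnt b + N + kk * t) mod kk" using Sa hs unfolding S_def by simp
  have c2: "cnt a = (cnt b + N) mod kk" unfolding c1 by (rule mod_mult_self2)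
  have l0: "0 < ll" "1 < ll" using ll3 by simp_all
  have cb: "cnt b < 2 * N"
    using low2[OF cnt_lt[of b]] pb qbit_cnt[OF l0(1), of b] qbit_cnt[OF l0(2), of b] unfolding PB_def by simp
  have c3: "cnt a = cnt b + N" using c2 cb by (simp add: kk_def)
  have p0: "(2::nat)^(ll - 1 - 0) = 4 * N" using Nm by (simp add: ll_def)
  have "cnt a < 4 * N" using c3 cb by simp
  then have "qbit ll (cnt a) 0 = 0" using p0 by (simp add: qbit_def)
  then show ?thesis using qbit_cnt[OF l0(1), of a] by simp
qed

end


lemma all_less2: "(\<forall>t<(2::nat). P t) \<longleftrightarrow> P 0 \<and> P 1"
proof
  assume "\<forall>t<2. P t" then show "P 0 \<and> P 1" by simp
next
  assume h: "P 0 \<and> P 1"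
  show "\<forall>t<2. P t"
  proof (intro allI impI)
    fix t :: nat assume "t < 2" then have "t = 0 \<or> t = 1" by auto
    then show "P t" using h by auto
  qed
qed

context circ begin

lemma main: "pp^(kk-1) \<le> p_acc nn (Mb kk) 2"
proof -
  let ?U = "Mb kk"
  let ?f = "\<lambda>a b. (cmod (?U $$ (a,b)))^2"
  let ?c = "(2::real)^(nn-2)"
  let ?B = "{b. b<2^nn \<and> PB b}"
  have cpos: "0 < ?c" by simp
  have "p_acc nn ?U 2 = (\<Sum>a<2^nn. \<Sum>b<2^nn. (if qbit nn a 0 = 0 \<and> (\<forall>t<2. qbit nn b t = 0) then 1 / 2^(nn-2) else 0) * ?f a b)"
    by (rule p_acc_formula[OF Mb_carrier])
  also have "\<dots> = (\<Sum>b<2^nn. \<Sum>a<2^nn. (if qbit nn a 0 = 0 \<and> (\<forall>t<2. qbit nn b t = 0) then 1 / 2^(nn-2) else 0) * ?f a b)"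
    by (rule sum.swap)
  also have "\<dots> = (\<Sum>b<2^nn. if PB b then (\<Sum>a<2^nn. if qbit nn a 0 = 0 then ?f a b else 0) / ?c else 0)"
  proof (intro sum.cong refl)
    fix b assume b: "b \<in> {..<(2::nat)^nn}"
    show "(\<Sum>a<2^nn. (if qbit nn a 0 = 0 \<and> (\<forall>t<2. qbit nn b t = 0) then 1 / 2^(nn-2) else 0) * ?f a b) =
      (if PB b then (\<Sum>a<2^nn. if qbit nn a 0 = 0 then ?f a b else 0) / ?c else 0)"
      unfolding all_less2 PB_def by (auto simp: sum_divide_distrib intro!: sum.cong)
  qed
  finally have p1: "p_acc nn ?U 2 = (\<Sum>b<2^nn. if PB b then (\<Sum>a<2^nn. if qbit nn a 0 = 0 then ?f a b else 0) / ?c else 0)" .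
  have k0: "0 < kk" by (rule K_pos)
  have bnd: "phi kk b 0 + phi kk b 1 \<le> (\<Sum>a<2^nn. if qbit nn a 0 = 0 then ?f a b else 0)"
    if b: "b < 2^nn" and pb: "PB b" for b
  proof -
    have "phi kk b 0 + phi kk b 1 = Phi kk b 0 + Phi kk b 1" using Phi_phi[of kk 0 b] Phi_phi[of kk 1 b] b by simp
    also have "\<dots> = (\<Sum>a<2^nn. (if H kk b 0 a then ?f a b else 0) + (if H kk b 1 a then ?f a b else 0))"
      unfolding Phi_def by (simp add: sum.distrib)
    also have "\<dots> \<le> (\<Sum>a<2^nn. if qbit nn a 0 = 0 then ?f a b else 0)"
    proof (rule sum_mono)
      fix a assume a: "a \<in> {..<(2::nat)^nn}"
      show "(if H kk b 0 a then ?f a b else 0) + (if H kk b 1 a then ?f a b else 0) \<le> (if qbit nn a 0 = 0 then ?f a b else 0)"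
      proof (cases "?U $$ (a,b) = 0")
        case True then show ?thesis by simp
      next
        case False
        have nb: "\<not> (H kk b 0 a \<and> H kk b 1 a)" using k0 unfolding H_def by auto
        show ?thesis
        proof (cases "H kk b 0 a")
          case True
          have "qbit nn a 0 = 0" using accept[OF b pb _ False True] a by simp
          then show ?thesis using True nb by simp
        next
          case F0: False
          show ?thesis
          proof (cases "H kk b 1 a")
            case True
            have "qbit nn a 0 = 0" using accept[OF b pb _ False True] a by simp
            then show ?thesis using True F0 by simp
          next
            case False then show ?thesis using F0 by simp
          qed
        qed
      qed
    qed
    finally show ?thesis .
  qed
  have "(\<Sum>b<2^nn. if PB b then (phi kk b 0 + phi kk b 1) / ?c else 0) \<le>
        (\<Sum>b<2^nn. if PB b then (\<Sum>a<2^nn. if qbit nn a 0 = 0 then ?f a b else 0) / ?c else 0)"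
    using bnd cpos by (intro sum_mono) (auto intro: divide_right_mono)
  also have "\<dots> = p_acc nn ?U 2" using p1 by simp
  finally have p2: "(\<Sum>b<2^nn. if PB b then (phi kk b 0 + phi kk b 1) / ?c else 0) \<le> p_acc nn ?U 2" .
  have "(\<Sum>b<2^nn. if PB b then (phi kk b 0 + phi kk b 1) / ?c else 0) =
      ((\<Sum>b\<in>?B. phi kk b 0) + (\<Sum>b\<in>?B. phi kk b 1)) / ?c"
  proof -
    have "(\<Sum>b<2^nn. if PB b then (phi kk b 0 + phi kk b 1) / ?c else 0) =
       (\<Sum>b<2^nn. ((if PB b then phi kk b 0 else 0) + (if PB b then phi kk b 1 else 0)) / ?c)"
      by (intro sum.cong refl) simp
    also have "\<dots> = ((\<Sum>b<2^nn. if PB b then phi kk b 0 else 0) + (\<Sum>b<2^nn. if PB b then phi kk b 1 else 0)) / ?c"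
      by (simp only: sum_divide_distrib[symmetric] sum.distrib)
    finally show ?thesis unfolding filt_sum .
  qed
  also have "\<dots> = pp^(kk-1)"
  proof -
    have kS: "kk = Suc (kk - 1)" using k0 by simp
    have k1: "kk - 1 < kk" using k0 by simp
    have s0: "(\<Sum>b\<in>?B. phi kk b 0) = pp^(kk-1) / 2 * ?c"
      using sumB[OF k1, of 0] countB kS by simp
    have s1: "(\<Sum>b\<in>?B. phi kk b 1) = pp^(kk-1) / 2 * ?c"
      using sumB[OF k1, of 1] countB kS by simp
    show ?thesis unfolding s0 s1 using cpos by simp
  qed
  finally show ?thesis using p2 by simp
qed

end


theorem proposition15:
  fixes Q :: "complex mat" and w N :: nat
  assumes "1 \<le> w"
    and "unitary_mat (2 ^ w) Q"
    and "\<exists>m. N = 2 ^ m"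
  shows "p_acc (R2_n N w) (R2 N w Q) 2 \<ge> (p_acc w Q 1) ^ (8 * N - 1)"
proof -
  obtain m where m: "N = 2^m" using assms(3) by blast
  interpret c: circ N w m Q using assms(1,2) m by unfold_locales
  have n: "R2_n N w = c.nn" unfolding R2_n_def R2_l_def c.nn_def c.ll_def c.kk_def using m by simp
  have "c.pp ^ (c.kk - 1) \<le> p_acc c.nn (c.Mb c.kk) 2" by (rule c.main)
  then show ?thesis unfolding n c.R2_eq c.pp_def c.kk_def .
qed

end
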